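(* Assume the Setting (S). For every $N\ge1$, $h_N>0$ everywhere and $$\partial\bar\partial\log h_N=h_{N-1}-2h_N+h_{N+1}$$ (the Ricci form of the Kähler form $h_N\,dx\wedge dy$ equals the second difference of the Kähler forms $h_{N-1},h_N,h_{N+1}$).
   Context: Setting (S). Let $\mathcal H$ be a separable complex Hilbert space with inner product $\langle\cdot|\cdot\rangle$, antilinear in the first slot. Let $\Lambda\subset\mathbb C$ be a lattice with fundamental domain $D$. Write $z=x+iy$, $\partial=\tfrac12(\partial_x-i\partial_y)$, $\bar\partial=\tfrac12(\partial_x+i\partial_y)$. Let $f:\mathbb C\to\mathcal H$ be holomorphic and satisfy: (i) for every $z\in\mathbb C$ and every $n\ge0$ the vectors $f(z),\partial f(z),\dots,\partial^n f(z)$ are linearly independent; (ii) for every $\lambda\in\Lambda$ there are a nowhere-vanishing holomorphic function $c_\lambda:\mathbb C\to\mathbb C$ and a unitary operator $V_\lambda$ on $\mathcal H$ independent of $z$ such that $f(z+\lambda)=c_\lambda(z)V_\lambda f(z)$ for all $z$. For $n\ge0$ let $P_n(z)$ be the orthogonal projector onto $\mathrm{span}\{f(z),\partial f(z),\dots,\partial^{n-1}f(z)\}$ (with $P_0=0$), let $r_n=\|(1-P_n)\partial^n f\|>0$ and define the "generalized Landau levels" $u_n=(1-P_n)\partial^n f/r_n$. Define $h_N=|\langle u_N|\partial u_{N-1}\rangle|^2$ for $N\ge1$ and $h_0=0$. *)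

theory Defs
  imports "HOL-Analysis.Analysis"
begin

text \<open>A complex Hilbert space is modelled as a real Hilbert space 'h (real inner product,
complete) together with an orthogonal complex structure J (multiplication by i):
J is real-linear, norm preserving, and J (J v) = - v.\<close>

definition complex_structure :: "('h::real_inner \<Rightarrow> 'h) \<Rightarrow> bool" where
  "complex_structure J \<longleftrightarrow> linear J \<and> (\<forall>v. norm (J v) = norm v) \<and> (\<forall>v. J (J v) = - v)"

definition cscale :: "('h::real_vector \<Rightarrow> 'h) \<Rightarrow> complex \<Rightarrow> 'h \<Rightarrow> 'h" where
  "cscale J a v = Re a *\<^sub>R v + Im a *\<^sub>R J v"

text \<open>Complex inner product, antilinear in the first slot.\<close>
definition cinner :: "('h::real_inner \<Rightarrow> 'h) \<Rightarrow> 'h \<Rightarrow> 'h \<Rightarrow> complex" where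
  "cinner J u v = complex_of_real (u \<bullet> v) - \<i> * complex_of_real (u \<bullet> J v)"

definition dx :: "(complex \<Rightarrow> 'a::real_normed_vector) \<Rightarrow> complex \<Rightarrow> 'a" where
  "dx g z = vector_derivative (\<lambda>t::real. g (z + complex_of_real t)) (at 0)"

definition dy :: "(complex \<Rightarrow> 'a::real_normed_vector) \<Rightarrow> complex \<Rightarrow> 'a" where
  "dy g z = vector_derivative (\<lambda>t::real. g (z + \<i> * complex_of_real t)) (at 0)"

definition has_dx :: "(complex \<Rightarrow> 'a::real_normed_vector) \<Rightarrow> complex \<Rightarrow> bool" where
  "has_dx g z \<longleftrightarrow> (\<lambda>t::real. g (z + complex_of_real t)) differentiable (at 0)"

definition has_dy :: "(complex \<Rightarrow> 'a::real_normed_vector) \<Rightarrow> complex \<Rightarrow> bool" where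
  "has_dy g z \<longleftrightarrow> (\<lambda>t::real. g (z + \<i> * complex_of_real t)) differentiable (at 0)"

definition dH :: "('h::real_normed_vector \<Rightarrow> 'h) \<Rightarrow> (complex \<Rightarrow> 'h) \<Rightarrow> complex \<Rightarrow> 'h" where
  "dH J g z = (1/2) *\<^sub>R (dx g z - J (dy g z))"

definition dC :: "(complex \<Rightarrow> complex) \<Rightarrow> complex \<Rightarrow> complex" where
  "dC g z = (dx g z - \<i> * dy g z) / 2"

definition dbarC :: "(complex \<Rightarrow> complex) \<Rightarrow> complex \<Rightarrow> complex" where
  "dbarC g z = (dx g z + \<i> * dy g z) / 2"

definition holoH :: "('h::real_normed_vector \<Rightarrow> 'h) \<Rightarrow> (complex \<Rightarrow> 'h) \<Rightarrow> bool" where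
  "holoH J f \<longleftrightarrow> (\<forall>z. \<exists>v. (f has_derivative (\<lambda>w. cscale J w v)) (at z))"

definition clin_indep :: "('h::real_vector \<Rightarrow> 'h) \<Rightarrow> (nat \<Rightarrow> 'h) \<Rightarrow> nat \<Rightarrow> bool" where
  "clin_indep J v n \<longleftrightarrow>
     (\<forall>c::nat \<Rightarrow> complex. (\<Sum>k\<le>n. cscale J (c k) (v k)) = 0 \<longrightarrow> (\<forall>k\<le>n. c k = 0))"

text \<open>Complex span of v 0, ..., v (n-1) (the zero space for n = 0).\<close>
definition cspan_upto :: "('h::real_vector \<Rightarrow> 'h) \<Rightarrow> (nat \<Rightarrow> 'h) \<Rightarrow> nat \<Rightarrow> 'h set" where
  "cspan_upto J v n = {(\<Sum>k<n. cscale J (c k) (v k)) | c. True}"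

text \<open>(1 - P) x, where P is the orthogonal projector onto the (closed) subspace S.\<close>
definition perp_part :: "('h::real_inner \<Rightarrow> 'h) \<Rightarrow> 'h set \<Rightarrow> 'h \<Rightarrow> 'h" where
  "perp_part J S x = (THE w. x - w \<in> S \<and> (\<forall>s\<in>S. cinner J s w = 0))"

definition dn :: "('h::real_normed_vector \<Rightarrow> 'h) \<Rightarrow> (complex \<Rightarrow> 'h) \<Rightarrow> nat \<Rightarrow> complex \<Rightarrow> 'h" where
  "dn J f n = ((dH J) ^^ n) f"

definition rn :: "('h::real_inner \<Rightarrow> 'h) \<Rightarrow> (complex \<Rightarrow> 'h) \<Rightarrow> nat \<Rightarrow> complex \<Rightarrow> real" where
  "rn J f n z = norm (perp_part J (cspan_upto J (\<lambda>k. dn J f k z) n) (dn J f n z))"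

definition un :: "('h::real_inner \<Rightarrow> 'h) \<Rightarrow> (complex \<Rightarrow> 'h) \<Rightarrow> nat \<Rightarrow> complex \<Rightarrow> 'h" where
  "un J f n z = (1 / rn J f n z) *\<^sub>R perp_part J (cspan_upto J (\<lambda>k. dn J f k z) n) (dn J f n z)"

definition hN :: "('h::real_inner \<Rightarrow> 'h) \<Rightarrow> (complex \<Rightarrow> 'h) \<Rightarrow> nat \<Rightarrow> complex \<Rightarrow> real" where
  "hN J f N z = (if N = 0 then 0
      else (cmod (cinner J (un J f N z) (dH J (un J f (N - 1)) z)))\<^sup>2)"

definition lattice :: "complex \<Rightarrow> complex \<Rightarrow> complex set" where
  "lattice \<omega>1 \<omega>2 = {of_int m * \<omega>1 + of_int n * \<omega>2 | m n. True}"

definition unitary :: "('h::real_inner \<Rightarrow> 'h) \<Rightarrow> ('h \<Rightarrow> 'h) \<Rightarrow> bool" where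
  "unitary J V \<longleftrightarrow> linear V \<and> (\<forall>v. V (J v) = J (V v)) \<and> (\<forall>v. norm (V v) = norm v) \<and> surj V"

end

theory Submission
  imports Defs "HOL-Complex_Analysis.Complex_Analysis"
begin

locale cstruct =
  fixes J :: "'h::{real_inner, complete_space} \<Rightarrow> 'h"
  assumes J: "complex_structure J"
begin

lemma J_linear: "linear J" using J unfolding complex_structure_def by auto
lemma J_norm[simp]: "norm (J v) = norm v" using J unfolding complex_structure_def by auto
lemma JJ[simp]: "J (J v) = - v" using J unfolding complex_structure_def by auto

lemma J_add[simp]: "J (x + y) = J x + J y" using J_linear by (simp add: linear_add)
lemma J_scaleR[simp]: "J (c *\<^sub>R x) = c *\<^sub>R J x" using J_linear by (simp add: linear_scale)
lemma J_zero[simp]: "J 0 = 0" using J_linear by (simp add: linear_0)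
lemma J_minus[simp]: "J (- x) = - J x" using J_linear by (simp add: linear_neg)
lemma J_diff[simp]: "J (x - y) = J x - J y" using J_linear by (simp add: linear_diff)
lemma J_sum: "J (sum g A) = (\<Sum>a\<in>A. J (g a))" using J_linear by (simp add: linear_sum)

lemma J_bl: "bounded_linear J"
proof -
  interpret linear J by (rule J_linear)
  show ?thesis by unfold_locales (rule exI[of _ 1], simp)
qed

lemma J_inner[simp]: "inner (J x) (J y) = inner x y"
proof -
  have "(norm (J x + J y))\<^sup>2 = (norm (x+y))\<^sup>2" using J_norm[of "x+y"] by (simp only: J_add)
  hence "inner (J x + J y) (J x + J y) = inner (x+y) (x+y)"
    by (simp add: power2_norm_eq_inner)
  moreover have "inner (J x) (J x) = inner x x" "inner (J y) (J y) = inner y y"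
    using J_norm[of x] J_norm[of y] by (simp_all add: power2_norm_eq_inner[symmetric])
  ultimately show ?thesis by (simp add: inner_add inner_commute)
qed

lemma J_inner_left: "inner (J x) y = - inner x (J y)"
proof -
  have "inner (J x) y = inner (J (J x)) (J y)" by (rule J_inner[symmetric])
  thus ?thesis by simp
qed

lemma inner_J_swap: "inner y (J x) = - inner x (J y)"
  by (metis J_inner_left inner_commute)

lemma J_inner_self[simp]: "inner x (J x) = 0"
  using J_inner_left[of x x] by (simp add: inner_commute)
lemma J_inner_self2[simp]: "inner (J x) x = 0"
  using J_inner_left[of x x] by (simp add: inner_commute)

lemma cscale_simps[simp]:
  "cscale J a (x + y) = cscale J a x + cscale J a y"
  "cscale J (a + b) x = cscale J a x + cscale J b x"
  "cscale J 0 x = 0"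
  "cscale J a 0 = 0"
  "cscale J 1 x = x"
  "cscale J (complex_of_real r) x = r *\<^sub>R x"
  "cscale J \<i> x = J x"
  "cscale J (- a) x = - cscale J a x"
  "cscale J a (- x) = - cscale J a x"
  "cscale J (a - b) x = cscale J a x - cscale J b x"
  "cscale J a (x - y) = cscale J a x - cscale J a y"
  "cscale J a (r *\<^sub>R x) = r *\<^sub>R cscale J a x"
  "J (cscale J a x) = cscale J a (J x)"
  unfolding cscale_def by (auto simp: algebra_simps scaleR_add_left)

lemma cscale_J: "cscale J a (J x) = cscale J (\<i> * a) x"
  unfolding cscale_def by (simp add: algebra_simps)

lemma cscale_mult: "cscale J a (cscale J b x) = cscale J (a * b) x"
  unfolding cscale_def by (simp add: algebra_simps scaleR_add_left)

lemma cscale_of_real_mult: "cscale J (complex_of_real r * a) x = r *\<^sub>R cscale J a x"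
  unfolding cscale_def by (simp add: algebra_simps)

lemma cscale_sum_left: "cscale J (sum g A) x = (\<Sum>a\<in>A. cscale J (g a) x)"
  by (induction A rule: infinite_finite_induct) auto

lemma cscale_sum_right: "cscale J a (sum g A) = (\<Sum>i\<in>A. cscale J a (g i))"
  by (induction A rule: infinite_finite_induct) auto

lemma norm_cscale: "norm (cscale J a x) = cmod a * norm x"
proof -
  have "(norm (cscale J a x))\<^sup>2 = (Re a)\<^sup>2 * (norm x)\<^sup>2 + (Im a)\<^sup>2 * (norm x)\<^sup>2"
    unfolding cscale_def power2_norm_eq_inner
    by (simp add: inner_add inner_commute algebra_simps power2_eq_square)
  also have "\<dots> = (cmod a * norm x)\<^sup>2"
    by (simp add: cmod_def power_mult_distrib algebra_simps)
  finally show ?thesis by (simp add: power2_eq_iff_nonneg)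
qed

lemma cinner_simps[simp]:
  "cinner J x (y + z) = cinner J x y + cinner J x z"
  "cinner J (x + y) z = cinner J x z + cinner J y z"
  "cinner J x (y - z) = cinner J x y - cinner J x z"
  "cinner J (x - y) z = cinner J x z - cinner J y z"
  "cinner J x (- y) = - cinner J x y"
  "cinner J (- x) y = - cinner J x y"
  "cinner J 0 y = 0"
  "cinner J x 0 = 0"
  "cinner J x (r *\<^sub>R y) = complex_of_real r * cinner J x y"
  "cinner J (r *\<^sub>R x) y = complex_of_real r * cinner J x y"
  unfolding cinner_def by (auto simp: inner_add inner_diff algebra_simps)

lemma cinner_J_right[simp]: "cinner J x (J y) = \<i> * cinner J x y"
  unfolding cinner_def by (simp add: algebra_simps)

lemma cinner_J_left[simp]: "cinner J (J x) y = - \<i> * cinner J x y"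
  unfolding cinner_def by (simp add: algebra_simps J_inner_left)

lemma cinner_cscale_right[simp]: "cinner J x (cscale J a y) = a * cinner J x y"
  unfolding cscale_def
  by (simp add: algebra_simps complex_eq_iff)

lemma cinner_cscale_left[simp]: "cinner J (cscale J a x) y = cnj a * cinner J x y"
  unfolding cscale_def
  by (simp add: algebra_simps complex_eq_iff)

lemma cinner_commute: "cinner J y x = cnj (cinner J x y)"
  proof -
  have "inner y (J x) = - inner x (J y)" by (rule inner_J_swap)
  thus ?thesis unfolding cinner_def by (simp add: complex_eq_iff inner_commute)
qed

lemma cinner_self: "cinner J x x = complex_of_real ((norm x)\<^sup>2)"
  unfolding cinner_def by (simp add: power2_norm_eq_inner)

lemma cinner_sum_right: "cinner J x (sum g A) = (\<Sum>i\<in>A. cinner J x (g i))"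
  by (induction A rule: infinite_finite_induct) auto
lemma cinner_sum_left: "cinner J (sum g A) x = (\<Sum>i\<in>A. cinner J (g i) x)"
  by (induction A rule: infinite_finite_induct) auto

lemma Re_cinner: "Re (cinner J x y) = inner x y"
  unfolding cinner_def by simp

lemma cinner_self_eq_0[simp]: "cinner J x x = 0 \<longleftrightarrow> x = 0"
  by (simp add: cinner_self)

lemma norm_cinner: "cmod (cinner J x y) \<le> norm x * norm y"
proof (cases "cinner J x y = 0")
  case True thus ?thesis by simp
next
  case False
  define c where "c = cinner J x y / complex_of_real (cmod (cinner J x y))"
  have cm: "cmod c = 1" using False unfolding c_def by (simp add: norm_divide)
  have "cinner J (cscale J c x) y = cnj c * cinner J x y" by simp
  also have "\<dots> = complex_of_real (cmod (cinner J x y))"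
    using False unfolding c_def
    by (simp add: field_simps complex_norm_square[symmetric] power2_eq_square)
  finally have "cmod (cinner J x y) = inner (cscale J c x) y"
    using Re_cinner[of "cscale J c x" y] by simp
  also have "\<dots> \<le> norm (cscale J c x) * norm y" by (rule norm_cauchy_schwarz)
  also have "\<dots> = norm x * norm y" by (simp add: norm_cscale cm)
  finally show ?thesis .
qed

lemma cinner_bb: "bounded_bilinear (cinner J)"
  by unfold_locales (auto intro!: exI[of _ 1] simp: norm_cinner scaleR_conv_of_real)

lemma cscale_bb: "bounded_bilinear (cscale J)"
  by unfold_locales (auto intro!: exI[of _ 1] simp: norm_cscale cscale_of_real_mult[symmetric]
      scaleR_conv_of_real)

end

abbreviation FD :: "(complex \<Rightarrow> 'a::real_normed_vector) \<Rightarrow> complex \<Rightarrow> complex \<Rightarrow> 'a" where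
  "FD g z \<equiv> frechet_derivative g (at z)"

lemma FD_works: "g differentiable at z \<Longrightarrow> (g has_derivative FD g z) (at z)"
  using frechet_derivative_works by blast

lemma FD_eq: "(g has_derivative D) (at z) \<Longrightarrow> FD g z = D"
  using frechet_derivative_at by metis

lemma FD_bl: "g differentiable at z \<Longrightarrow> bounded_linear (FD g z)"
  using FD_works has_derivative_bounded_linear by blast

lemma line_vd:
  assumes "(g has_derivative D) (at z)"
  shows "((\<lambda>t::real. g (z + complex_of_real t * u)) has_vector_derivative D u) (at 0)"
proof -
  have l: "((\<lambda>t::real. z + complex_of_real t * u) has_derivative (\<lambda>t. complex_of_real t * u)) (at 0)"
    by (auto intro!: derivative_eq_intros)
  have g: "(g has_derivative D) (at (z + complex_of_real 0 * u))" using assms by simp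
  have "((\<lambda>t. g (z + complex_of_real t * u)) has_derivative (\<lambda>t. D (complex_of_real t * u))) (at 0)"
    by (rule has_derivative_compose[OF l g])
  moreover have "D (complex_of_real t * u) = t *\<^sub>R D u" for t
  proof -
    interpret bounded_linear D using assms by (rule has_derivative_bounded_linear)
    have "complex_of_real t * u = t *\<^sub>R u" by (simp add: scaleR_conv_of_real)
    thus ?thesis by (simp add: scale)
  qed
  ultimately show ?thesis unfolding has_vector_derivative_def by simp
qed

lemma dx_eq: "(g has_derivative D) (at z) \<Longrightarrow> dx g z = D 1"
  unfolding dx_def using line_vd[of g D z 1] by (simp add: vector_derivative_at)

lemma dy_eq: "(g has_derivative D) (at z) \<Longrightarrow> dy g z = D \<i>"
  unfolding dy_def using line_vd[of g D z \<i>] by (simp add: vector_derivative_at mult.commute)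

lemma has_dx_I: "g differentiable at z \<Longrightarrow> has_dx g z"
  unfolding has_dx_def using line_vd[of g "FD g z" z 1] FD_works
  by (auto intro: differentiableI_vector)

lemma has_dy_I: "g differentiable at z \<Longrightarrow> has_dy g z"
  unfolding has_dy_def using line_vd[of g "FD g z" z \<i>] FD_works
  by (auto intro: differentiableI_vector simp: mult.commute)

lemma dx_FD: "g differentiable at z \<Longrightarrow> dx g z = FD g z 1"
  using FD_works dx_eq by blast
lemma dy_FD: "g differentiable at z \<Longrightarrow> dy g z = FD g z \<i>"
  using FD_works dy_eq by blast

lemma FD_decomp:
  assumes "g differentiable at z"
  shows "FD g z u = Re u *\<^sub>R FD g z 1 + Im u *\<^sub>R FD g z \<i>"
proof -
  interpret bounded_linear "FD g z" using assms by (rule FD_bl)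
  have "u = Re u *\<^sub>R 1 + Im u *\<^sub>R \<i>" by (simp add: complex_eq_iff)
  hence "FD g z u = FD g z (Re u *\<^sub>R 1 + Im u *\<^sub>R \<i>)" by simp
  thus ?thesis by (simp add: add scale)
qed

definition C2 :: "(complex \<Rightarrow> 'a::real_normed_vector) \<Rightarrow> bool" where
  "C2 g \<longleftrightarrow> (\<forall>z. g differentiable at z) \<and> (\<forall>u z. (\<lambda>w. FD g w u) differentiable at z)"

lemma C2_diff: "C2 g \<Longrightarrow> g differentiable at z" unfolding C2_def by blast
lemma C2_FD_diff: "C2 g \<Longrightarrow> (\<lambda>w. FD g w u) differentiable at z" unfolding C2_def by blast

lemma C2_dx_fun: "C2 g \<Longrightarrow> dx g = (\<lambda>w. FD g w 1)"
  by (rule ext) (simp add: dx_FD C2_diff)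
lemma C2_dy_fun: "C2 g \<Longrightarrow> dy g = (\<lambda>w. FD g w \<i>)"
  by (rule ext) (simp add: dy_FD C2_diff)

lemma C2_dx_diff: "C2 g \<Longrightarrow> dx g differentiable at z"
  using C2_FD_diff[of g 1 z] by (simp add: C2_dx_fun)
lemma C2_dy_diff: "C2 g \<Longrightarrow> dy g differentiable at z"
  using C2_FD_diff[of g \<i> z] by (simp add: C2_dy_fun)

lemma C2I:
  assumes "\<And>z. (g has_derivative D z) (at z)"
    and "\<And>u z. (\<lambda>w. D w u) differentiable at z"
  shows "C2 g"
proof -
  have "FD g z = D z" for z using assms(1) by (rule FD_eq)
  thus ?thesis unfolding C2_def using assms differentiableI by fastforce
qed

lemma C2_const[simp]: "C2 (\<lambda>z. (c::'a::real_normed_vector))"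
  by (rule C2I[where D="\<lambda>z u. 0"]) auto

lemma C2_bl:
  assumes "bounded_linear L" "C2 g"
  shows "C2 (\<lambda>z. L (g z))"
proof (rule C2I[where D="\<lambda>z u. L (FD g z u)"])
  fix z
  show "((\<lambda>z. L (g z)) has_derivative (\<lambda>u. L (FD g z u))) (at z)"
    using bounded_linear.has_derivative[OF assms(1) FD_works[OF C2_diff[OF assms(2)]]] .
next
  fix u z
  show "(\<lambda>w. L (FD g w u)) differentiable at z"
    using bounded_linear.has_derivative[OF assms(1)] C2_FD_diff[OF assms(2)]
    by (metis differentiable_def)
qed

lemma bb_differentiable:
  fixes z :: complex
  assumes "bounded_bilinear pr" "f differentiable at z" "g differentiable at z"
  shows "(\<lambda>w. pr (f w) (g w)) differentiable at z"
  using bounded_bilinear.FDERIV[OF assms(1) FD_works[OF assms(2)] FD_works[OF assms(3)]]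
  by (rule differentiableI)

lemma bb_FD:
  fixes z :: complex
  assumes "bounded_bilinear pr" "f differentiable at z" "g differentiable at z"
  shows "FD (\<lambda>w. pr (f w) (g w)) z u = pr (f z) (FD g z u) + pr (FD f z u) (g z)"
  using FD_eq[OF bounded_bilinear.FDERIV[OF assms(1) FD_works[OF assms(2)] FD_works[OF assms(3)]]]
  by simp

lemma C2_bb:
  assumes "bounded_bilinear pr" "C2 f" "C2 g"
  shows "C2 (\<lambda>z. pr (f z) (g z))"
proof (rule C2I[where D="\<lambda>z u. pr (f z) (FD g z u) + pr (FD f z u) (g z)"])
  fix z
  show "((\<lambda>z. pr (f z) (g z)) has_derivative (\<lambda>u. pr (f z) (FD g z u) + pr (FD f z u) (g z))) (at z)"
    using bounded_bilinear.FDERIV[OF assms(1) FD_works[OF C2_diff[OF assms(2)]] FD_works[OF C2_diff[OF assms(3)]]] .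
next
  fix u z
  show "(\<lambda>w. pr (f w) (FD g w u) + pr (FD f w u) (g w)) differentiable at z"
    by (intro differentiable_add bb_differentiable[OF assms(1)] C2_diff C2_FD_diff assms)
qed

lemma C2_add[intro]: "C2 f \<Longrightarrow> C2 g \<Longrightarrow> C2 (\<lambda>z. f z + g z)"
  apply (rule C2I[where D="\<lambda>z u. FD f z u + FD g z u"])
   apply (rule has_derivative_add[OF FD_works FD_works]; erule C2_diff)
  apply (rule differentiable_add[OF C2_FD_diff C2_FD_diff]; assumption)
  done

lemma C2_minus[intro]: "C2 f \<Longrightarrow> C2 (\<lambda>z. - f z)"
  apply (rule C2I[where D="\<lambda>z u. - FD f z u"])
   apply (rule has_derivative_minus[OF FD_works]; erule C2_diff)
  apply (rule differentiable_minus[OF C2_FD_diff]; assumption)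
  done

lemma C2_diff'[intro]: "C2 f \<Longrightarrow> C2 g \<Longrightarrow> C2 (\<lambda>z. f z - g z)"
  using C2_add[of f "\<lambda>z. - g z"] C2_minus[of g] by simp

lemma C2_sum[intro]: "(\<And>i. i \<in> A \<Longrightarrow> C2 (g i)) \<Longrightarrow> C2 (\<lambda>z. \<Sum>i\<in>A. g i z)"
proof (induction A rule: infinite_finite_induct)
  case (insert x F)
  have "C2 (\<lambda>z. g x z + (\<Sum>i\<in>F. g i z))" using insert by (intro C2_add) auto
  thus ?case using insert by simp
qed auto

lemma C2_real_comp:
  fixes R :: "complex \<Rightarrow> real"
  assumes "C2 R" "open A" "\<And>z. R z \<in> A"
    and "\<And>x. x \<in> A \<Longrightarrow> (\<phi> has_real_derivative \<phi>' x) (at x)"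
    and "\<And>x. x \<in> A \<Longrightarrow> \<phi>' differentiable at x"
  shows "C2 (\<lambda>z. \<phi> (R z))"
proof (rule C2I[where D="\<lambda>z u. \<phi>' (R z) * FD R z u"])
  fix z
  have "(\<phi> has_derivative (\<lambda>h. h * \<phi>' (R z))) (at (R z))"
    using assms(4)[OF assms(3)[of z]] by (simp add: has_field_derivative_def mult.commute[of _ "\<phi>' (R z)"])
  from has_derivative_compose[OF FD_works[OF C2_diff[OF assms(1)]] this]
  show "((\<lambda>z. \<phi> (R z)) has_derivative (\<lambda>u. \<phi>' (R z) * FD R z u)) (at z)"
    by (simp add: mult.commute)
next
  fix u z
  have "(\<lambda>w. \<phi>' (R w)) differentiable at z"
  proof -
    have "\<phi>' differentiable at (R z)" using assms(3,5) by blast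
    then obtain D where "(\<phi>' has_derivative D) (at (R z))" unfolding differentiable_def by blast
    from has_derivative_compose[OF FD_works[OF C2_diff[OF assms(1)]] this]
    show ?thesis by (rule differentiableI)
  qed
  thus "(\<lambda>w. \<phi>' (R w) * FD R w u) differentiable at z"
    by (intro differentiable_mult C2_FD_diff assms(1))
qed

definition dHb :: "('h::real_normed_vector \<Rightarrow> 'h) \<Rightarrow> (complex \<Rightarrow> 'h) \<Rightarrow> complex \<Rightarrow> 'h" where
  "dHb J g z = (1/2) *\<^sub>R (dx g z + J (dy g z))"

lemma dC_FD: "g differentiable at z \<Longrightarrow> dC g z = (FD g z 1 - \<i> * FD g z \<i>) / 2"
  unfolding dC_def by (simp add: dx_FD dy_FD)
lemma dbarC_FD: "g differentiable at z \<Longrightarrow> dbarC g z = (FD g z 1 + \<i> * FD g z \<i>) / 2"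
  unfolding dbarC_def by (simp add: dx_FD dy_FD)

lemma dC_add: "f differentiable at z \<Longrightarrow> g differentiable at z \<Longrightarrow>
   dC (\<lambda>w. f w + g w) z = dC f z + dC g z"
  by (simp add: dC_FD FD_eq[OF has_derivative_add[OF FD_works FD_works]] differentiable_add field_simps)
lemma dbarC_add: "f differentiable at z \<Longrightarrow> g differentiable at z \<Longrightarrow>
   dbarC (\<lambda>w. f w + g w) z = dbarC f z + dbarC g z"
  by (simp add: dbarC_FD FD_eq[OF has_derivative_add[OF FD_works FD_works]] differentiable_add field_simps)
lemma dC_diff: "f differentiable at z \<Longrightarrow> g differentiable at z \<Longrightarrow>
   dC (\<lambda>w. f w - g w) z = dC f z - dC g z"
  by (simp add: dC_FD FD_eq[OF has_derivative_diff[OF FD_works FD_works]] differentiable_diff field_simps)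
lemma dbarC_diff: "f differentiable at z \<Longrightarrow> g differentiable at z \<Longrightarrow>
   dbarC (\<lambda>w. f w - g w) z = dbarC f z - dbarC g z"
  by (simp add: dbarC_FD FD_eq[OF has_derivative_diff[OF FD_works FD_works]] differentiable_diff field_simps)

lemma dC_mult: "f differentiable at z \<Longrightarrow> g differentiable at z \<Longrightarrow>
   dC (\<lambda>w. f w * g w) z = dC f z * g z + f z * dC g z"
  using bb_FD[OF bounded_bilinear_mult, of f z g]
  by (simp add: dC_FD differentiable_mult algebra_simps add_divide_distrib diff_divide_distrib)

lemma dC_real_comp:
  fixes R :: "complex \<Rightarrow> real"
  assumes "R differentiable at z" "(\<phi> has_real_derivative d) (at (R z))"
  shows "dC (\<lambda>w. complex_of_real (\<phi> (R w))) z = complex_of_real d * dC (\<lambda>w. complex_of_real (R w)) z"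
proof -
  have p: "(\<phi> has_derivative (\<lambda>h. h * d)) (at (R z))"
  proof -
    have e: "(\<lambda>h::real. d * h) = (\<lambda>h. h * d)" by (auto simp: mult.commute)
    show ?thesis using assms(2) unfolding has_field_derivative_def e .
  qed
  have h1: "((\<lambda>w. complex_of_real (\<phi> (R w))) has_derivative (\<lambda>u. complex_of_real (FD R z u * d))) (at z)"
    using bounded_linear.has_derivative[OF bounded_linear_of_real has_derivative_compose[OF FD_works[OF assms(1)] p]] .
  have h2: "((\<lambda>w. complex_of_real (R w)) has_derivative (\<lambda>u. complex_of_real (FD R z u))) (at z)"
    using bounded_linear.has_derivative[OF bounded_linear_of_real FD_works[OF assms(1)]] .
  show ?thesis
    using h1 h2 unfolding dC_def by (simp add: dx_eq dy_eq algebra_simps diff_divide_distrib)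
qed

lemma dbarC_real_comp:
  fixes R :: "complex \<Rightarrow> real"
  assumes "R differentiable at z" "(\<phi> has_real_derivative d) (at (R z))"
  shows "dbarC (\<lambda>w. complex_of_real (\<phi> (R w))) z = complex_of_real d * dbarC (\<lambda>w. complex_of_real (R w)) z"
proof -
  have p: "(\<phi> has_derivative (\<lambda>h. h * d)) (at (R z))"
  proof -
    have e: "(\<lambda>h::real. d * h) = (\<lambda>h. h * d)" by (auto simp: mult.commute)
    show ?thesis using assms(2) unfolding has_field_derivative_def e .
  qed
  have h1: "((\<lambda>w. complex_of_real (\<phi> (R w))) has_derivative (\<lambda>u. complex_of_real (FD R z u * d))) (at z)"
    using bounded_linear.has_derivative[OF bounded_linear_of_real has_derivative_compose[OF FD_works[OF assms(1)] p]] .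
  have h2: "((\<lambda>w. complex_of_real (R w)) has_derivative (\<lambda>u. complex_of_real (FD R z u))) (at z)"
    using bounded_linear.has_derivative[OF bounded_linear_of_real FD_works[OF assms(1)]] .
  show ?thesis
    using h1 h2 unfolding dbarC_def by (simp add: dx_eq dy_eq algebra_simps add_divide_distrib)
qed

context cstruct
begin

lemma dH_FD: "g differentiable at z \<Longrightarrow> dH J g z = (1/2) *\<^sub>R (FD g z 1 - J (FD g z \<i>))"
  unfolding dH_def by (simp add: dx_FD dy_FD)
lemma dHb_FD: "g differentiable at z \<Longrightarrow> dHb J g z = (1/2) *\<^sub>R (FD g z 1 + J (FD g z \<i>))"
  unfolding dHb_def by (simp add: dx_FD dy_FD)

lemma dH_add: "f differentiable at z \<Longrightarrow> g differentiable at z \<Longrightarrow>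
   dH J (\<lambda>w. f w + g w) z = dH J f z + dH J g z"
  by (simp add: dH_FD FD_eq[OF has_derivative_add[OF FD_works FD_works]] differentiable_add algebra_simps)
lemma dHb_add: "f differentiable at z \<Longrightarrow> g differentiable at z \<Longrightarrow>
   dHb J (\<lambda>w. f w + g w) z = dHb J f z + dHb J g z"
  by (simp add: dHb_FD FD_eq[OF has_derivative_add[OF FD_works FD_works]] differentiable_add algebra_simps)
lemma dH_diff: "f differentiable at z \<Longrightarrow> g differentiable at z \<Longrightarrow>
   dH J (\<lambda>w. f w - g w) z = dH J f z - dH J g z"
  by (simp add: dH_FD FD_eq[OF has_derivative_diff[OF FD_works FD_works]] differentiable_diff algebra_simps)
lemma dHb_diff: "f differentiable at z \<Longrightarrow> g differentiable at z \<Longrightarrow>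
   dHb J (\<lambda>w. f w - g w) z = dHb J f z - dHb J g z"
  by (simp add: dHb_FD FD_eq[OF has_derivative_diff[OF FD_works FD_works]] differentiable_diff algebra_simps)

lemma dH_const[simp]: "dH J (\<lambda>w. c) z = 0"
  using dH_FD[of "\<lambda>w. c" z] by simp
lemma dHb_const[simp]: "dHb J (\<lambda>w. c) z = 0"
  using dHb_FD[of "\<lambda>w. c" z] by simp

lemma dH_sum: "finite A \<Longrightarrow> (\<And>i. i \<in> A \<Longrightarrow> g i differentiable at z) \<Longrightarrow>
   dH J (\<lambda>w. \<Sum>i\<in>A. g i w) z = (\<Sum>i\<in>A. dH J (g i) z)"
proof (induction A rule: finite_induct)
  case (insert x F)
  have "dH J (\<lambda>w. \<Sum>i\<in>insert x F. g i w) z = dH J (\<lambda>w. g x w + (\<Sum>i\<in>F. g i w)) z"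
    using insert by simp
  also have "\<dots> = dH J (g x) z + dH J (\<lambda>w. \<Sum>i\<in>F. g i w) z"
    using insert by (intro dH_add) (auto intro!: differentiable_sum)
  finally show ?case using insert by simp
qed simp

lemma dHb_sum: "finite A \<Longrightarrow> (\<And>i. i \<in> A \<Longrightarrow> g i differentiable at z) \<Longrightarrow>
   dHb J (\<lambda>w. \<Sum>i\<in>A. g i w) z = (\<Sum>i\<in>A. dHb J (g i) z)"
proof (induction A rule: finite_induct)
  case (insert x F)
  have "dHb J (\<lambda>w. \<Sum>i\<in>insert x F. g i w) z = dHb J (\<lambda>w. g x w + (\<Sum>i\<in>F. g i w)) z"
    using insert by simp
  also have "\<dots> = dHb J (g x) z + dHb J (\<lambda>w. \<Sum>i\<in>F. g i w) z"
    using insert by (intro dHb_add) (auto intro!: differentiable_sum)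
  finally show ?case using insert by simp
qed simp

lemma dC_cinner:
  assumes "a differentiable at z" "b differentiable at z"
  shows "dC (\<lambda>w. cinner J (a w) (b w)) z = cinner J (dHb J a z) (b z) + cinner J (a z) (dH J b z)"
  using bb_FD[OF cinner_bb assms]
  by (simp add: dC_FD dH_FD dHb_FD assms bb_differentiable[OF cinner_bb assms] algebra_simps
       add_divide_distrib diff_divide_distrib)

lemma dbarC_cinner:
  assumes "a differentiable at z" "b differentiable at z"
  shows "dbarC (\<lambda>w. cinner J (a w) (b w)) z = cinner J (dH J a z) (b z) + cinner J (a z) (dHb J b z)"
  using bb_FD[OF cinner_bb assms]
  by (simp add: dbarC_FD dH_FD dHb_FD assms bb_differentiable[OF cinner_bb assms] algebra_simps
       add_divide_distrib diff_divide_distrib)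

lemma cscale_half: "cscale J (a / 2) x = (1/2) *\<^sub>R cscale J a x"
  unfolding cscale_def by (simp add: algebra_simps)
lemma cscale_i_mult: "cscale J (\<i> * a) x = J (cscale J a x)"
  by (simp add: cscale_J[symmetric])

lemma dH_cscale:
  assumes "c differentiable at z" "w differentiable at z"
  shows "dH J (\<lambda>t. cscale J (c t) (w t)) z = cscale J (dC c z) (w z) + cscale J (c z) (dH J w z)"
  using bb_FD[OF cscale_bb assms]
  by (simp add: dC_FD dH_FD assms bb_differentiable[OF cscale_bb assms] algebra_simps
       add_divide_distrib diff_divide_distrib cscale_half cscale_i_mult)

lemma dHb_cscale:
  assumes "c differentiable at z" "w differentiable at z"
  shows "dHb J (\<lambda>t. cscale J (c t) (w t)) z = cscale J (dbarC c z) (w z) + cscale J (c z) (dHb J w z)"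
  using bb_FD[OF cscale_bb assms]
  by (simp add: dbarC_FD dHb_FD assms bb_differentiable[OF cscale_bb assms] algebra_simps
       add_divide_distrib diff_divide_distrib cscale_half cscale_i_mult)

lemma holo_dH:
  assumes "(e has_derivative (\<lambda>w. cscale J w v)) (at z)"
  shows "dH J e z = v" "dHb J e z = 0"
  using assms unfolding dH_def dHb_def by (simp_all add: dx_eq dy_eq scaleR_2[symmetric])

end

lemma line_deriv:
  fixes F :: "complex \<Rightarrow> real"
  assumes "F differentiable at (a + complex_of_real s * u)"
  shows "((\<lambda>s. F (a + complex_of_real s * u)) has_real_derivative FD F (a + complex_of_real s * u) u) (at s)"
proof -
  let ?q = "a + complex_of_real s * u"
  have l: "((\<lambda>s::real. a + complex_of_real s * u) has_derivative (\<lambda>h. complex_of_real h * u)) (at s)"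
    by (auto intro!: derivative_eq_intros)
  have "((\<lambda>s. F (a + complex_of_real s * u)) has_derivative (\<lambda>h. FD F ?q (complex_of_real h * u))) (at s)"
    by (rule has_derivative_compose[OF l FD_works[OF assms]])
  moreover have "(\<lambda>h. FD F ?q (complex_of_real h * u)) = (\<lambda>h. FD F ?q u * h)"
  proof
    fix h
    interpret bounded_linear "FD F ?q" using assms by (rule FD_bl)
    have "complex_of_real h * u = h *\<^sub>R u" by (simp add: scaleR_conv_of_real)
    thus "FD F ?q (complex_of_real h * u) = FD F ?q u * h" by (simp add: scale)
  qed
  ultimately show ?thesis unfolding has_field_derivative_def by simp
qed

lemma delta_limit:
  fixes F :: "complex \<Rightarrow> real"
  assumes dF: "\<And>z. F differentiable at z"
    and G: "((\<lambda>q. FD F q u) has_derivative D) (at p)"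
  shows "((\<lambda>t. (F (p + complex_of_real t * u + complex_of_real t * w) - F (p + complex_of_real t * u)
            - F (p + complex_of_real t * w) + F p) / t\<^sup>2) \<longlongrightarrow> D w) (at_right 0)"
proof (rule tendsto_iff[THEN iffD2], intro allI impI)
  fix e :: real assume e: "e > 0"
  define K where "K = 2 * cmod u + cmod w + 1"
  have K: "K > 0" unfolding K_def by (simp add: add_nonneg_pos)
  interpret D: bounded_linear D using G by (rule has_derivative_bounded_linear)
  from G[unfolded has_derivative_at_alt] obtain d where d: "d > 0"
    and dd: "\<And>y. norm (y - p) < d \<Longrightarrow> norm (FD F y u - FD F p u - D (y - p)) \<le> (e / (4*K)) * norm (y - p)"
    using e K by (metis divide_pos_pos mult_pos_pos zero_less_numeral)
  show "\<forall>\<^sub>F t in at_right 0. dist ((F (p + complex_of_real t * u + complex_of_real t * w) - F (p + complex_of_real t * u)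
            - F (p + complex_of_real t * w) + F p) / t\<^sup>2) (D w) < e"
    unfolding eventually_at_right_field
  proof (intro exI[of _ "d / K"] conjI allI impI)
    show "0 < d / K" using d K by simp
    fix t :: real assume t0: "0 < t" and td: "t < d / K"
    define \<phi> where "\<phi> s = F (p + complex_of_real s * u + complex_of_real t * w) - F (p + complex_of_real s * u)" for s
    have der: "DERIV \<phi> s :> (FD F (p + complex_of_real t * w + complex_of_real s * u) u - FD F (p + complex_of_real s * u) u)" for s
    proof -
      have e1: "\<phi> = (\<lambda>s. F ((p + complex_of_real t * w) + complex_of_real s * u) - F (p + complex_of_real s * u))"
        unfolding \<phi>_def by (auto simp: algebra_simps)
      show ?thesis unfolding e1 by (intro DERIV_diff line_deriv dF)
    qed
    obtain \<xi> where \<xi>: "0 < \<xi>" "\<xi> < t" and mvt: "\<phi> t - \<phi> 0 = (t - 0) * (FD F (p + complex_of_real t * w + complex_of_real \<xi> * u) u - FD F (p + complex_of_real \<xi> * u) u)"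
      using MVT2[OF t0 der] by blast
    define y1 where "y1 = p + complex_of_real t * w + complex_of_real \<xi> * u"
    define y2 where "y2 = p + complex_of_real \<xi> * u"
    have n1: "norm (y1 - p) \<le> t * cmod w + t * cmod u"
      unfolding y1_def using \<xi> t0
      by (auto simp: norm_mult intro!: order_trans[OF norm_triangle_ineq] add_mono mult_right_mono)
    have n2: "norm (y2 - p) \<le> t * cmod u"
      unfolding y2_def using \<xi> t0 by (auto simp: norm_mult intro!: mult_right_mono)
    have tK: "t * K < d" using td K by (simp add: field_simps)
    have "t * cmod w + t * cmod u \<le> t * K" using t0 unfolding K_def
      by (auto simp: algebra_simps)
    hence l1: "norm (y1 - p) < d" using n1 tK by linarith
    have "t * cmod u \<le> t * K" using t0 unfolding K_def by (auto simp: algebra_simps)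
    hence l2: "norm (y2 - p) < d" using n2 tK by linarith
    have b1: "norm (FD F y1 u - FD F p u - D (y1 - p)) \<le> (e / (4*K)) * (t * K)"
      using dd[OF l1] n1 \<open>t * cmod w + t * cmod u \<le> t * K\<close> e K
      by (meson order_trans mult_left_mono divide_nonneg_pos less_imp_le mult_pos_pos zero_less_numeral)
    have b2: "norm (FD F y2 u - FD F p u - D (y2 - p)) \<le> (e / (4*K)) * (t * K)"
      using dd[OF l2] n2 \<open>t * cmod u \<le> t * K\<close> e K
      by (meson order_trans mult_left_mono divide_nonneg_pos less_imp_le mult_pos_pos zero_less_numeral)
    have lin: "D (y1 - p) - D (y2 - p) = t *\<^sub>R D w"
    proof -
      have "y1 - p - (y2 - p) = t *\<^sub>R w" unfolding y1_def y2_def by (simp add: scaleR_conv_of_real)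
      thus ?thesis by (metis D.diff D.scale)
    qed
    have "\<bar>(FD F y1 u - FD F y2 u) - t * D w\<bar> \<le> norm (FD F y1 u - FD F p u - D (y1 - p)) + norm (FD F y2 u - FD F p u - D (y2 - p))"
      using lin by (simp add: real_norm_def)
    also have "\<dots> \<le> e * t / 2" using b1 b2 K by (simp add: field_simps)
    finally have main: "\<bar>(FD F y1 u - FD F y2 u) - t * D w\<bar> \<le> e * t / 2" .
    have delta: "F (p + complex_of_real t * u + complex_of_real t * w) - F (p + complex_of_real t * u)
            - F (p + complex_of_real t * w) + F p = t * (FD F y1 u - FD F y2 u)"
      using mvt unfolding \<phi>_def y1_def y2_def by (simp add: algebra_simps)
    have "dist ((F (p + complex_of_real t * u + complex_of_real t * w) - F (p + complex_of_real t * u)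
            - F (p + complex_of_real t * w) + F p) / t\<^sup>2) (D w) = \<bar>(FD F y1 u - FD F y2 u) - t * D w\<bar> / t"
    proof -
      have "t * (FD F y1 u - FD F y2 u) / t\<^sup>2 - D w = ((FD F y1 u - FD F y2 u) - t * D w) / t"
        using t0 by (simp add: power2_eq_square field_simps)
      thus ?thesis using t0 unfolding delta dist_real_def by simp
    qed
    also have "\<dots> \<le> e / 2" using main t0 by (simp add: field_simps)
    also have "\<dots> < e" using e by simp
    finally show "dist ((F (p + complex_of_real t * u + complex_of_real t * w) - F (p + complex_of_real t * u)
            - F (p + complex_of_real t * w) + F p) / t\<^sup>2) (D w) < e" .
  qed
qed

lemma schwarz_real:
  fixes F :: "complex \<Rightarrow> real"
  assumes "C2 F"
  shows "dy (dx F) p = dx (dy F) p"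
proof -
  have dF: "\<And>z. F differentiable at z" using assms by (rule C2_diff)
  have G1: "((\<lambda>q. FD F q 1) has_derivative FD (dx F) p) (at p)"
    using FD_works[OF C2_dx_diff[OF assms]] C2_dx_fun[OF assms] by simp
  have G2: "((\<lambda>q. FD F q \<i>) has_derivative FD (dy F) p) (at p)"
    using FD_works[OF C2_dy_diff[OF assms]] C2_dy_fun[OF assms] by simp
  note L1 = delta_limit[OF dF G1, of \<i>]
  note L2 = delta_limit[OF dF G2, of 1]
  have e: "(\<lambda>t. (F (p + complex_of_real t * \<i> + complex_of_real t * 1) - F (p + complex_of_real t * \<i>)
            - F (p + complex_of_real t * 1) + F p) / t\<^sup>2) =
        (\<lambda>t. (F (p + complex_of_real t * 1 + complex_of_real t * \<i>) - F (p + complex_of_real t * 1)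
            - F (p + complex_of_real t * \<i>) + F p) / t\<^sup>2)"
    by (rule ext) (simp add: algebra_simps)
  have "FD (dx F) p \<i> = FD (dy F) p 1"
    using tendsto_unique[OF trivial_limit_at_right_real L1] L2 unfolding e by blast
  thus ?thesis using dy_FD[OF C2_dx_diff[OF assms]] dx_FD[OF C2_dy_diff[OF assms]] by simp
qed

lemma dx_bl: "bounded_linear L \<Longrightarrow> g differentiable at z \<Longrightarrow> dx (\<lambda>w. L (g w)) z = L (dx g z)"
  using dx_eq[OF bounded_linear.has_derivative[OF _ FD_works]] dx_FD by metis
lemma dy_bl: "bounded_linear L \<Longrightarrow> g differentiable at z \<Longrightarrow> dy (\<lambda>w. L (g w)) z = L (dy g z)"
  using dy_eq[OF bounded_linear.has_derivative[OF _ FD_works]] dy_FD by metis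

lemma schwarz:
  fixes g :: "complex \<Rightarrow> 'a::real_inner"
  assumes "C2 g"
  shows "dy (dx g) p = dx (dy g) p"
proof -
  have "inner a (dy (dx g) p) = inner a (dx (dy g) p)" for a
  proof -
    have bl: "bounded_linear (inner a)" by (rule bounded_linear_inner_right)
    have C: "C2 (\<lambda>z. inner a (g z))" using C2_bl[OF bl assms] .
    have ex: "dx (\<lambda>z. inner a (g z)) = (\<lambda>z. inner a (dx g z))"
      by (rule ext, rule dx_bl[OF bl C2_diff[OF assms]])
    have ey: "dy (\<lambda>z. inner a (g z)) = (\<lambda>z. inner a (dy g z))"
      by (rule ext, rule dy_bl[OF bl C2_diff[OF assms]])
    have "dy (\<lambda>z. inner a (dx g z)) p = inner a (dy (dx g) p)"
      by (rule dy_bl[OF bl C2_dx_diff[OF assms]])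
    moreover have "dx (\<lambda>z. inner a (dy g z)) p = inner a (dx (dy g) p)"
      by (rule dx_bl[OF bl C2_dy_diff[OF assms]])
    ultimately show ?thesis using schwarz_real[OF C, of p] unfolding ex ey by simp
  qed
  from this[of "dy (dx g) p - dx (dy g) p"]
  have "inner (dy (dx g) p - dx (dy g) p) (dy (dx g) p - dx (dy g) p) = 0"
    by (simp add: inner_diff_right)
  thus ?thesis by simp
qed

context cstruct
begin

lemma hd_comb:
  assumes "a differentiable at z" "b differentiable at z"
  shows "((\<lambda>w. c *\<^sub>R (a w + s *\<^sub>R J (b w))) has_derivative (\<lambda>u. c *\<^sub>R (FD a z u + s *\<^sub>R J (FD b z u)))) (at z)"
proof -
  have "((\<lambda>w. J (b w)) has_derivative (\<lambda>u. J (FD b z u))) (at z)"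
    by (rule bounded_linear.has_derivative[OF J_bl FD_works[OF assms(2)]])
  hence "((\<lambda>w. a w + s *\<^sub>R J (b w)) has_derivative (\<lambda>u. FD a z u + s *\<^sub>R J (FD b z u))) (at z)"
    by (intro has_derivative_add FD_works assms has_derivative_scaleR_right)
  thus ?thesis by (rule has_derivative_scaleR_right)
qed

lemma dH_dHb_comm:
  assumes "C2 g"
  shows "dH J (dHb J g) z = dHb J (dH J g) z"
proof -
  have f1: "dHb J g = (\<lambda>w. (1/2) *\<^sub>R (dx g w + 1 *\<^sub>R J (dy g w)))"
    unfolding dHb_def by auto
  have f2: "dH J g = (\<lambda>w. (1/2) *\<^sub>R (dx g w + (-1) *\<^sub>R J (dy g w)))"
    unfolding dH_def by auto
  note h1 = hd_comb[OF C2_dx_diff[OF assms] C2_dy_diff[OF assms], where c="1/2" and s=1]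
  note h2 = hd_comb[OF C2_dx_diff[OF assms] C2_dy_diff[OF assms], where c="1/2" and s="-1"]
  have "dH J (dHb J g) z = (1/2) *\<^sub>R (dx (dHb J g) z - J (dy (dHb J g) z))"
    unfolding dH_def ..
  also have "\<dots> = (1/4) *\<^sub>R (dx (dx g) z + dy (dy g) z)"
    unfolding f1 dx_eq[OF h1] dy_eq[OF h1] using schwarz[OF assms, of z]
    by (simp add: dx_FD dy_FD C2_dx_diff C2_dy_diff assms algebra_simps)
  also have "\<dots> = (1/2) *\<^sub>R (dx (dH J g) z + J (dy (dH J g) z))"
    unfolding f2 dx_eq[OF h2] dy_eq[OF h2] using schwarz[OF assms, of z]
    by (simp add: dx_FD dy_FD C2_dx_diff C2_dy_diff assms algebra_simps)
  also have "\<dots> = dHb J (dH J g) z" unfolding dHb_def ..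
  finally show ?thesis .
qed

end

lemma scalar_est:
  fixes g :: "complex \<Rightarrow> complex"
  assumes hg: "g holomorphic_on UNIV" and B: "\<And>x. x \<in> cball z0 3 \<Longrightarrow> cmod (g x) \<le> B"
    and h: "cmod h \<le> 1"
  shows "cmod (deriv g (z0+h) - deriv g z0 - h * deriv (deriv g) z0) \<le> B * (cmod h)\<^sup>2"
proof -
  have B0: "B \<ge> 0" using B[of z0] by (meson centre_in_cball norm_ge_zero order_trans zero_le_numeral)
  have h1: "deriv g holomorphic_on UNIV" using hg by (rule holomorphic_deriv) simp
  have h2: "deriv (deriv g) holomorphic_on UNIV" using h1 by (rule holomorphic_deriv) simp
  have h3: "deriv (deriv (deriv g)) holomorphic_on UNIV" using h2 by (rule holomorphic_deriv) simp
  have b3: "cmod (deriv (deriv (deriv g)) w) \<le> B" if w: "w \<in> cball z0 1" for w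
  proof -
    have "norm ((deriv ^^ 3) g w) \<le> fact 3 * B / 2^3"
    proof (rule Cauchy_inequality)
      show "g holomorphic_on ball w 2" using hg by (rule holomorphic_on_subset) simp
      show "continuous_on (cball w 2) g"
        using holomorphic_on_imp_continuous_on[OF hg] by (rule continuous_on_subset) simp
      show "0 < (2::real)" by simp
      fix x assume "norm (w - x) = 2"
      hence "dist w x = 2" by (simp add: dist_norm)
      moreover have "dist z0 w \<le> 1" using w by simp
      moreover have "dist z0 x \<le> dist z0 w + dist w x" by (rule dist_triangle)
      ultimately have "dist z0 x \<le> 3" by linarith
      thus "norm (g x) \<le> B" using B by simp
    qed
    also have "\<dots> \<le> B" using B0 by (simp add: fact_numeral)
    finally show ?thesis by (simp add: numeral_3_eq_3)
  qed
  define S where "S = cball z0 (cmod h)"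
  have cS: "convex S" unfolding S_def by simp
  have SS: "S \<subseteq> cball z0 1" unfolding S_def using h by auto
  have d2: "cmod (deriv (deriv g) w - deriv (deriv g) z0) \<le> B * cmod h" if "w \<in> S" for w
  proof -
    have "cmod (deriv (deriv g) w - deriv (deriv g) z0) \<le> B * cmod (w - z0)"
    proof (rule field_differentiable_bound[OF cS])
      fix z assume "z \<in> S"
      show "(deriv (deriv g) has_field_derivative deriv (deriv (deriv g)) z) (at z within S)"
        using h2 by (rule holomorphic_derivI) auto
      show "cmod (deriv (deriv (deriv g)) z) \<le> B" using b3 SS \<open>z \<in> S\<close> by auto
    next
      show "w \<in> S" by fact
      show "z0 \<in> S" unfolding S_def by simp
    qed
    also have "\<dots> \<le> B * cmod h" using that B0 unfolding S_def
      by (intro mult_left_mono) (auto simp: dist_norm norm_minus_commute)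
    finally show ?thesis .
  qed
  have "cmod ((deriv g (z0+h) - (z0+h) * deriv (deriv g) z0) - (deriv g z0 - z0 * deriv (deriv g) z0))
        \<le> (B * cmod h) * cmod ((z0+h) - z0)"
  proof (rule field_differentiable_bound[OF cS])
    fix z assume "z \<in> S"
    have "(deriv g has_field_derivative deriv (deriv g) z) (at z within S)"
      using h1 by (rule holomorphic_derivI) auto
    thus "((\<lambda>w. deriv g w - w * deriv (deriv g) z0) has_field_derivative
           (deriv (deriv g) z - deriv (deriv g) z0)) (at z within S)"
      by (auto intro!: derivative_eq_intros)
    show "cmod (deriv (deriv g) z - deriv (deriv g) z0) \<le> B * cmod h" using d2 \<open>z \<in> S\<close> .
  next
    show "z0 + h \<in> S" "z0 \<in> S" unfolding S_def by (auto simp: dist_norm)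
  qed
  thus ?thesis by (simp add: algebra_simps power2_eq_square)
qed

context cstruct
begin

lemma cinner_right_bl: "bounded_linear (cinner J x)"
  by (rule bounded_bilinear.bounded_linear_right[OF cinner_bb])

lemma cscale_left_bl: "bounded_linear (\<lambda>w. cscale J w v)"
  by (rule bounded_bilinear.bounded_linear_left[OF cscale_bb])

lemma scalar_deriv:
  assumes "(f has_derivative (\<lambda>w. cscale J w v)) (at z)"
  shows "((\<lambda>z. cinner J x (f z)) has_field_derivative cinner J x v) (at z)"
proof -
  have "((\<lambda>z. cinner J x (f z)) has_derivative (\<lambda>w. cinner J x (cscale J w v))) (at z)"
    by (rule bounded_linear.has_derivative[OF cinner_right_bl assms])
  moreover have "(\<lambda>w. cinner J x (cscale J w v)) = (*) (cinner J x v)"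
    by (auto simp: mult.commute)
  ultimately show ?thesis unfolding has_field_derivative_def by simp
qed

lemma holo_deriv_holo:
  assumes hf: "\<And>z. (f has_derivative (\<lambda>w. cscale J w (f' z))) (at z)"
  shows "\<exists>L. (f' has_derivative (\<lambda>w. cscale J w L)) (at z0)"
proof -
  have cf: "continuous_on (cball z0 3) f"
    by (intro continuous_at_imp_continuous_on ballI has_derivative_continuous[OF hf])
  have "bounded (f ` cball z0 3)"
    by (intro compact_imp_bounded compact_continuous_image cf compact_cball)
  then obtain Mf where Mf: "Mf > 0" "\<And>x. x \<in> cball z0 3 \<Longrightarrow> norm (f x) \<le> Mf"
    unfolding bounded_pos by auto
  define Q where "Q h = cscale J (1/h) (f' (z0 + h) - f' z0)" for h
  have key: "norm (Q h - Q k) \<le> Mf * (cmod h + cmod k)"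
    if h: "0 < cmod h" "cmod h \<le> 1" and k: "0 < cmod k" "cmod k \<le> 1" for h k
  proof -
    define x where "x = Q h - Q k"
    define ga where "ga z = cinner J x (f z)" for z
    have dga: "(ga has_field_derivative cinner J x (f' z)) (at z)" for z
      unfolding ga_def by (rule scalar_deriv[OF hf])
    have hga: "ga holomorphic_on UNIV"
      unfolding holomorphic_on_def field_differentiable_def
    using dga has_field_derivative_at_within by blast
    have deq: "deriv ga = (\<lambda>z. cinner J x (f' z))"
      by (rule ext, rule DERIV_imp_deriv[OF dga])
    have bnd: "cmod (ga y) \<le> norm x * Mf" if "y \<in> cball z0 3" for y
      unfolding ga_def using norm_cinner[of x "f y"] mult_left_mono[OF Mf(2)[OF that], of "norm x"]
      by simp
    define c2 where "c2 = deriv (deriv ga) z0"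
    have E: "cmod (cinner J x (f' (z0+t)) - cinner J x (f' z0) - t * c2) \<le> norm x * Mf * (cmod t)\<^sup>2"
      if "cmod t \<le> 1" for t
      using scalar_est[OF hga bnd that] unfolding deq c2_def .
    have QQ: "cinner J x (Q t) = c2 + (cinner J x (f' (z0+t)) - cinner J x (f' z0) - t * c2) / t"
      if "t \<noteq> 0" for t
    proof -
      have "cinner J x (Q t) = (1/t) * (cinner J x (f' (z0+t)) - cinner J x (f' z0))"
        unfolding Q_def by (simp only: cinner_cscale_right cinner_simps(3))
      also have "\<dots> = c2 + (cinner J x (f' (z0+t)) - cinner J x (f' z0) - t * c2) / t"
        using that by (simp add: field_simps)
      finally show ?thesis .
    qed
    have hk0: "h \<noteq> 0" "k \<noteq> 0" using h k by auto
    have "(norm x)\<^sup>2 = cmod (cinner J x x)" unfolding cinner_self norm_of_real by simp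
    also have "cinner J x x = (cinner J x (f' (z0+h)) - cinner J x (f' z0) - h * c2) / h
        - (cinner J x (f' (z0+k)) - cinner J x (f' z0) - k * c2) / k"
    proof -
      have "cinner J x x = cinner J x (Q h - Q k)" by (subst (2) x_def) (rule refl)
      also have "\<dots> = cinner J x (Q h) - cinner J x (Q k)" by (rule cinner_simps(3))
      finally show ?thesis by (simp only: QQ hk0 not_False_eq_True) simp
    qed
    also have "cmod \<dots> \<le> norm x * Mf * cmod h + norm x * Mf * cmod k"
    proof -
      have a: "cmod ((cinner J x (f' (z0+h)) - cinner J x (f' z0) - h * c2) / h) \<le> norm x * Mf * cmod h"
        using E[OF h(2)] h by (simp add: norm_divide field_simps power2_eq_square)
      have b: "cmod ((cinner J x (f' (z0+k)) - cinner J x (f' z0) - k * c2) / k) \<le> norm x * Mf * cmod k"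
        using E[OF k(2)] k by (simp add: norm_divide field_simps power2_eq_square)
      show ?thesis by (rule order_trans[OF norm_triangle_ineq4 add_mono[OF a b]])
    qed
    finally have "(norm x)\<^sup>2 \<le> norm x * (Mf * (cmod h + cmod k))" by (simp add: algebra_simps)
    hence "norm x \<le> Mf * (cmod h + cmod k)"
    proof (cases "norm x = 0")
      case True thus ?thesis using Mf h k by simp
    next
      case False
      hence "norm x > 0" by simp
      moreover assume "(norm x)\<^sup>2 \<le> norm x * (Mf * (cmod h + cmod k))"
      ultimately show ?thesis by (simp add: power2_eq_square)
    qed
    thus ?thesis unfolding x_def .
  qed
  define s where "s n = Q (1 / of_nat (Suc n))" for n
  have nsn: "cmod (1 / complex_of_nat (Suc n)) = 1 / real (Suc n)" for n
    by (simp only: norm_divide norm_of_nat norm_one)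
  have sn: "0 < cmod (1 / complex_of_nat (Suc n))" "cmod (1 / complex_of_nat (Suc n)) \<le> 1" for n
  proof -
    have "cmod (complex_of_nat (Suc n)) = real (Suc n)" by (simp only: norm_of_nat)
    thus "0 < cmod (1 / complex_of_nat (Suc n))" "cmod (1 / complex_of_nat (Suc n)) \<le> 1"
      by (simp_all add: norm_divide del: of_nat_Suc)
  qed
  have cs: "Cauchy s"
  proof (rule CauchyI)
    fix e :: real assume e: "0 < e"
    obtain M :: nat where M: "2 * Mf / e < M" using reals_Archimedean2 by blast
    show "\<exists>M. \<forall>m\<ge>M. \<forall>n\<ge>M. norm (s m - s n) < e"
    proof (intro exI[of _ M] allI impI)
      fix m n assume mn: "m \<ge> M" "n \<ge> M"
      have inv: "cmod (1 / complex_of_nat (Suc j)) < e / (2 * Mf)" if "j \<ge> M" for j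
      proof -
        have "2 * Mf / e < Suc j" using M that by linarith
        hence "2 * Mf < e * Suc j" using e by (simp add: field_simps)
        thus ?thesis using e Mf unfolding nsn by (simp add: field_simps del: of_nat_Suc)
      qed
      have "norm (s m - s n) \<le> Mf * (cmod (1 / complex_of_nat (Suc m)) + cmod (1 / complex_of_nat (Suc n)))"
        unfolding s_def by (rule key[OF sn sn])
      also have "\<dots> < Mf * (e / (2*Mf) + e / (2*Mf))"
        using inv[OF mn(1)] inv[OF mn(2)] Mf by (intro mult_strict_left_mono add_strict_mono) auto
      also have "\<dots> = e" using Mf by (simp add: field_simps)
      finally show "norm (s m - s n) < e" .
    qed
  qed
  then obtain L where L: "s \<longlonglongrightarrow> L" using convergent_eq_Cauchy by blast
  have QL: "norm (Q h - L) \<le> Mf * cmod h" if h: "0 < cmod h" "cmod h \<le> 1" for h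
  proof -
    have t1: "(\<lambda>n. norm (Q h - s n)) \<longlonglongrightarrow> norm (Q h - L)"
      by (intro tendsto_intros L)
    have "(\<lambda>n. cmod (1 / complex_of_nat (Suc n))) \<longlonglongrightarrow> 0"
      unfolding nsn using LIMSEQ_inverse_real_of_nat by (simp add: inverse_eq_divide del: of_nat_Suc)
    hence t2: "(\<lambda>n. Mf * (cmod h + cmod (1 / complex_of_nat (Suc n)))) \<longlonglongrightarrow> Mf * (cmod h + 0)"
      by (intro tendsto_intros)
    show ?thesis
      using tendsto_le[OF trivial_limit_sequentially t2 t1] key[OF h sn] unfolding s_def by simp
  qed
  show ?thesis
  proof (intro exI[of _ L] has_derivative_at_alt[THEN iffD2] conjI allI impI)
    show "bounded_linear (\<lambda>w. cscale J w L)" by (rule cscale_left_bl)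
    fix e :: real assume e: "0 < e"
    show "\<exists>d>0. \<forall>y. norm (y - z0) < d \<longrightarrow> norm (f' y - f' z0 - cscale J (y - z0) L) \<le> e * norm (y - z0)"
    proof (intro exI[of _ "min 1 (e / Mf)"] conjI allI impI)
      show "0 < min 1 (e / Mf)" using e Mf by simp
      fix y assume y: "norm (y - z0) < min 1 (e / Mf)"
      define h where "h = y - z0"
      show "norm (f' y - f' z0 - cscale J (y - z0) L) \<le> e * norm (y - z0)"
      proof (cases "h = 0")
        case True thus ?thesis unfolding h_def by simp
      next
        case False
        have hh: "0 < cmod h" "cmod h \<le> 1" using False y unfolding h_def by auto
        have "f' y - f' z0 = cscale J h (Q h)"
          unfolding Q_def h_def using False by (simp add: cscale_mult h_def)
        hence eq: "f' y - f' z0 - cscale J (y - z0) L = cscale J h (Q h - L)"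
          unfolding h_def by simp
        have "norm (f' y - f' z0 - cscale J (y - z0) L) = cmod h * norm (Q h - L)"
          unfolding eq by (rule norm_cscale)
        also have "\<dots> \<le> cmod h * (Mf * cmod h)" using QL[OF hh] by (simp add: mult_left_mono)
        also have "\<dots> \<le> cmod h * e"
        proof -
          have "Mf * cmod h \<le> e" using y Mf unfolding h_def by (simp add: field_simps)
          thus ?thesis by (simp add: mult_left_mono)
        qed
        finally show ?thesis unfolding h_def by (simp add: mult.commute)
      qed
    qed
  qed
qed

lemma dn_Suc: "dn J f (Suc n) = dH J (dn J f n)"
  unfolding dn_def by simp

lemma dn_holo:
  assumes "holoH J f"
  shows "(dn J f n has_derivative (\<lambda>w. cscale J w (dn J f (Suc n) z))) (at z)"
proof (induction n arbitrary: z)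
  case 0
  obtain v where v: "(f has_derivative (\<lambda>w. cscale J w v)) (at z)"
    using assms unfolding holoH_def by blast
  have "dH J f z = v" using holo_dH(1)[OF v] .
  thus ?case using v by (simp add: dn_Suc dn_def)
next
  case (Suc n)
  obtain L where L: "(dn J f (Suc n) has_derivative (\<lambda>w. cscale J w L)) (at z)"
    using holo_deriv_holo[OF Suc.IH] by blast
  have "dH J (dn J f (Suc n)) z = L" using holo_dH(1)[OF L] .
  thus ?case using L by (simp add: dn_Suc)
qed

lemma dn_dHb: "holoH J f \<Longrightarrow> dHb J (dn J f n) z = 0"
  using holo_dH(2)[OF dn_holo] by blast

lemma dn_C2: "holoH J f \<Longrightarrow> C2 (dn J f n)"
proof (rule C2I[where D="\<lambda>z u. cscale J u (dn J f (Suc n) z)"])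
  assume h: "holoH J f"
  show "(dn J f n has_derivative (\<lambda>u. cscale J u (dn J f (Suc n) z))) (at z)" for z
    by (rule dn_holo[OF h])
  show "(\<lambda>w. cscale J u (dn J f (Suc n) w)) differentiable at z" for u z
    using bounded_linear.has_derivative[OF bounded_bilinear.bounded_linear_right[OF cscale_bb] dn_holo[OF h]]
    by (rule differentiableI)
qed

end

context cstruct
begin

lemma span_zero[simp]: "0 \<in> cspan_upto J w n"
  unfolding cspan_upto_def by (auto intro!: exI[of _ "\<lambda>k. 0"])

lemma span_0: "cspan_upto J w 0 = {0}"
  unfolding cspan_upto_def by auto

lemma span_add: "x \<in> cspan_upto J w n \<Longrightarrow> y \<in> cspan_upto J w n \<Longrightarrow> x + y \<in> cspan_upto J w n"
proof -
  assume "x \<in> cspan_upto J w n" "y \<in> cspan_upto J w n"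
  then obtain c d where x: "x = (\<Sum>k<n. cscale J (c k) (w k))" and y: "y = (\<Sum>k<n. cscale J (d k) (w k))"
    unfolding cspan_upto_def by auto
  have "x + y = (\<Sum>k<n. cscale J (c k + d k) (w k))" by (simp add: x y sum.distrib)
  thus ?thesis unfolding cspan_upto_def by (intro CollectI exI[of _ "\<lambda>k. c k + d k"]) simp
qed

lemma span_cscale: "x \<in> cspan_upto J w n \<Longrightarrow> cscale J a x \<in> cspan_upto J w n"
proof -
  assume "x \<in> cspan_upto J w n"
  then obtain c where x: "x = (\<Sum>k<n. cscale J (c k) (w k))"
    unfolding cspan_upto_def by auto
  have "cscale J a x = (\<Sum>k<n. cscale J (a * c k) (w k))" by (simp add: x cscale_sum_right cscale_mult)
  thus ?thesis unfolding cspan_upto_def by (intro CollectI exI[of _ "\<lambda>k. a * c k"]) simp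
qed

lemma span_minus: "x \<in> cspan_upto J w n \<Longrightarrow> - x \<in> cspan_upto J w n"
  using span_cscale[of x w n "-1"] by simp

lemma span_diff: "x \<in> cspan_upto J w n \<Longrightarrow> y \<in> cspan_upto J w n \<Longrightarrow> x - y \<in> cspan_upto J w n"
  using span_add[of x w n "- y"] span_minus[of y w n] by simp

lemma span_sum: "finite A \<Longrightarrow> (\<And>i. i \<in> A \<Longrightarrow> g i \<in> cspan_upto J w n) \<Longrightarrow> (\<Sum>i\<in>A. g i) \<in> cspan_upto J w n"
  by (induction A rule: finite_induct) (auto intro: span_add)

lemma span_mem: "k < n \<Longrightarrow> w k \<in> cspan_upto J w n"
  unfolding cspan_upto_def
proof (intro CollectI exI[of _ "\<lambda>i. if i = k then 1 else 0"] conjI TrueI)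
  assume "k < n"
  have "(\<Sum>i<n. cscale J (if i = k then 1 else 0) (w i)) = (\<Sum>i<n. if i = k then w i else 0)"
    by (rule sum.cong) auto
  also have "\<dots> = w k" using \<open>k < n\<close> by (simp add: sum.delta)
  finally show "w k = (\<Sum>i<n. cscale J (if i = k then 1 else 0) (w i))" by simp
qed

lemma span_mono: "k \<le> n \<Longrightarrow> x \<in> cspan_upto J w k \<Longrightarrow> x \<in> cspan_upto J w n"
proof -
  assume kn: "k \<le> n" and "x \<in> cspan_upto J w k"
  then obtain c where x: "x = (\<Sum>i<k. cscale J (c i) (w i))" unfolding cspan_upto_def by auto
  have "(\<Sum>i<k. cscale J (c i) (w i)) \<in> cspan_upto J w n"
    using kn by (intro span_sum span_cscale span_mem) auto
  thus ?thesis using x by simp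
qed

lemma span_orth:
  assumes "\<And>j. j < n \<Longrightarrow> cinner J (w j) d = 0" "s \<in> cspan_upto J w n"
  shows "cinner J s d = 0"
  using assms unfolding cspan_upto_def by (auto simp: cinner_sum_left)

lemma span_orth_zero:
  assumes "x \<in> cspan_upto J w n" "\<And>j. j < n \<Longrightarrow> cinner J (w j) x = 0"
  shows "x = 0"
  using span_orth[OF assms(2) assms(1)] by simp

lemma perp_unique:
  assumes "x - y \<in> cspan_upto J w n" "\<And>s. s \<in> cspan_upto J w n \<Longrightarrow> cinner J s y = 0"
  shows "perp_part J (cspan_upto J w n) x = y"
  unfolding perp_part_def
proof (rule the_equality)
  show "x - y \<in> cspan_upto J w n \<and> (\<forall>s\<in>cspan_upto J w n. cinner J s y = 0)" using assms by auto
  fix u assume u: "x - u \<in> cspan_upto J w n \<and> (\<forall>s\<in>cspan_upto J w n. cinner J s u = 0)"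
  have d: "u - y \<in> cspan_upto J w n"
    using span_diff[OF assms(1), of "x - u"] u by simp
  have a: "cinner J (u - y) u = 0" using u d by blast
  have b: "cinner J (u - y) y = 0" using assms(2) d by blast
  have c: "cinner J (u - y) (u - y) = cinner J (u - y) u - cinner J (u - y) y" by (rule cinner_simps(3))
  have "cinner J (u - y) (u - y) = 0" unfolding c a b by simp
  thus "u = y" by (subst (asm) cinner_self_eq_0) simp
qed

end

locale gs = cstruct J for J :: "'h::{real_inner, complete_space} \<Rightarrow> 'h" +
  fixes f :: "complex \<Rightarrow> 'h"
  assumes holo: "holoH J f" and indep: "\<And>z n. clin_indep J (\<lambda>k. dn J f k z) n"
begin

abbreviation "S n z \<equiv> cspan_upto J (\<lambda>k. dn J f k z) n"
abbreviation "v n z \<equiv> perp_part J (S n z) (dn J f n z)"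
abbreviation "R n z \<equiv> (norm (v n z))\<^sup>2"

lemma not_in_span: "dn J f n z \<notin> S n z"
proof
  assume "dn J f n z \<in> S n z"
  then obtain a where a: "dn J f n z = (\<Sum>k<n. cscale J (a k) (dn J f k z))"
    unfolding cspan_upto_def by auto
  define b where "b k = (if k = n then -1 else a k)" for k
  have "(\<Sum>k\<le>n. cscale J (b k) (dn J f k z)) = (\<Sum>k<n. cscale J (b k) (dn J f k z)) + cscale J (b n) (dn J f n z)"
    by (simp add: lessThan_Suc_atMost[symmetric])
  also have "(\<Sum>k<n. cscale J (b k) (dn J f k z)) = (\<Sum>k<n. cscale J (a k) (dn J f k z))"
    by (rule sum.cong) (auto simp: b_def)
  finally have "(\<Sum>k\<le>n. cscale J (b k) (dn J f k z)) = 0" using a by (simp add: b_def)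
  hence "b n = 0" using indep[of z n] unfolding clin_indep_def by blast
  thus False by (simp add: b_def)
qed

lemma GS:
  "dn J f n z - v n z \<in> S n z \<and> (\<forall>s\<in>S n z. cinner J s (v n z) = 0) \<and> v n z \<noteq> 0 \<and>
   v n z = dn J f n z - (\<Sum>k<n. cscale J (cinner J (v k z) (dn J f n z) / complex_of_real (R k z)) (v k z))"
proof (induction n rule: less_induct)
  case (less n)
  define c where "c k = cinner J (v k z) (dn J f n z) / complex_of_real (R k z)" for k
  define w where "w = dn J f n z - (\<Sum>k<n. cscale J (c k) (v k z))"
  have IH1: "dn J f k z - v k z \<in> S k z" if "k < n" for k using less.IH[OF that] by blast
  have IH2: "\<And>s. s \<in> S k z \<Longrightarrow> cinner J s (v k z) = 0" if "k < n" for k using less.IH[OF that] by blast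
  have IH3: "v k z \<noteq> 0" if "k < n" for k using less.IH[OF that] by blast
  have vS: "v j z \<in> S k z" if "j < k" "k \<le> n" for j k
  proof -
    have "dn J f j z \<in> S k z" using that by (intro span_mem)
    moreover have "dn J f j z - v j z \<in> S k z"
      using IH1[of j] that by (intro span_mono[of j k]) auto
    ultimately show ?thesis using span_diff[of "dn J f j z" _ k "dn J f j z - v j z"] by simp
  qed
  have vv: "cinner J (v j z) (v k z) = 0" if "j < n" "k < n" "j \<noteq> k" for j k
  proof (cases "j < k")
    case True thus ?thesis using IH2[OF that(2)] vS[of j k] that by auto
  next
    case False
    hence "k < j" using that by auto
    hence "cinner J (v k z) (v j z) = 0" using IH2[OF that(1)] vS[of k j] that by auto
    thus ?thesis by (subst cinner_commute) simp
  qed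
  have ortho_v: "cinner J (v j z) w = 0" if j: "j < n" for j
  proof -
    have "cinner J (v j z) w = cinner J (v j z) (dn J f n z) - (\<Sum>k<n. c k * cinner J (v j z) (v k z))"
      unfolding w_def by (simp add: cinner_sum_right)
    also have "(\<Sum>k<n. c k * cinner J (v j z) (v k z)) = (\<Sum>k<n. if k = j then c j * cinner J (v j z) (v j z) else 0)"
      by (rule sum.cong) (auto simp: vv j)
    also have "\<dots> = c j * cinner J (v j z) (v j z)" using j by (simp add: sum.delta)
    also have "\<dots> = cinner J (v j z) (dn J f n z)"
      using IH3[OF j] unfolding c_def cinner_self by simp
    finally show ?thesis by simp
  qed
  have ortho_e: "j < n \<Longrightarrow> cinner J (dn J f j z) w = 0" for j
  proof (induction j rule: less_induct)
    case (less j)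
    have h: "cinner J (dn J f i z) w = 0" if "i < j" for i
      using less.prems that by (intro less.IH[OF that]) simp
    have A: "cinner J (dn J f j z - v j z) w = 0"
      by (rule span_orth[OF h IH1[OF less.prems]])
    have B: "cinner J (dn J f j z) w = cinner J (v j z) w + cinner J (dn J f j z - v j z) w"
      by simp
    show ?case unfolding B A ortho_v[OF less.prems] by simp
  qed
  have orthS: "\<And>s. s \<in> S n z \<Longrightarrow> cinner J s w = 0"
    by (rule span_orth[OF ortho_e]) auto
  have ew: "dn J f n z - w \<in> S n z"
  proof -
    have eq: "dn J f n z - w = (\<Sum>k<n. cscale J (c k) (v k z))" unfolding w_def by simp
    have "(\<Sum>k<n. cscale J (c k) (v k z)) \<in> S n z"
    proof (rule span_sum)
      fix k assume "k \<in> {..<n}"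
      hence "v k z \<in> S n z" using vS[of k n] by simp
      thus "cscale J (c k) (v k z) \<in> S n z" by (rule span_cscale)
    qed simp
    thus ?thesis unfolding eq .
  qed
  have vw: "v n z = w" by (rule perp_unique[OF ew orthS])
  have nz: "w \<noteq> 0" using ew not_in_span by auto
  show ?case
  proof (intro conjI ballI)
    show "dn J f n z - v n z \<in> S n z" unfolding vw by (rule ew)
    show "cinner J s (v n z) = 0" if "s \<in> S n z" for s unfolding vw by (rule orthS[OF that])
    show "v n z \<noteq> 0" unfolding vw by (rule nz)
    show "v n z = dn J f n z - (\<Sum>k<n. cscale J (cinner J (v k z) (dn J f n z) / complex_of_real (R k z)) (v k z))"
      unfolding vw w_def c_def ..
  qed
qed

end

lemma real_deriv_differentiable: "(g has_real_derivative d) (at x) \<Longrightarrow> g differentiable at x"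
  using has_field_derivative_imp_has_derivative differentiableI by blast

lemma C2_inverse_pos:
  fixes r :: "complex \<Rightarrow> real"
  assumes "C2 r" "\<And>z. r z > 0"
  shows "C2 (\<lambda>z. inverse (r z))"
proof (rule C2_real_comp[OF assms(1), where A="{0<..}" and \<phi>'="\<lambda>x. - (inverse x ^ Suc (Suc 0))"])
  show "open {0::real<..}" by simp
  show "r z \<in> {0<..}" for z using assms(2) by simp
  fix x :: real assume x: "x \<in> {0<..}"
  show "(inverse has_real_derivative - (inverse x ^ Suc (Suc 0))) (at x)"
    using x by (intro DERIV_inverse) simp
  show "(\<lambda>x. - (inverse x ^ Suc (Suc 0))) differentiable at x"
    using x by (intro derivative_intros) auto
qed

lemma C2_ln_pos:
  fixes r :: "complex \<Rightarrow> real"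
  assumes "C2 r" "\<And>z. r z > 0"
  shows "C2 (\<lambda>z. ln (r z))"
proof (rule C2_real_comp[OF assms(1), where A="{0<..}" and \<phi>'="\<lambda>x. inverse x"])
  show "open {0::real<..}" by simp
  show "r z \<in> {0<..}" for z using assms(2) by simp
  fix x :: real assume x: "x \<in> {0<..}"
  show "(ln has_real_derivative inverse x) (at x)"
    using x by (intro DERIV_ln) simp
  have "((\<lambda>x. inverse x) has_real_derivative - (inverse x ^ Suc (Suc 0))) (at x)"
    using x by (intro DERIV_inverse) simp
  thus "(\<lambda>x. inverse x) differentiable at x" by (rule real_deriv_differentiable)
qed

lemma inv_sqrt_diff:
  fixes r :: "complex \<Rightarrow> real"
  assumes "r differentiable at z" "r z > 0"
  shows "(\<lambda>w. inverse (sqrt (r w))) differentiable at z"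
proof -
  have "((\<lambda>x. inverse (sqrt x)) has_real_derivative
      - (inverse (sqrt (r z)) * (inverse (sqrt (r z)) / 2) * inverse (sqrt (r z)))) (at (r z))"
    using assms(2) by (intro DERIV_inverse' DERIV_real_sqrt) auto
  then obtain D where "((\<lambda>x. inverse (sqrt x)) has_derivative D) (at (r z))"
    using has_field_derivative_imp_has_derivative by blast
  from has_derivative_compose[OF FD_works[OF assms(1)] this]
  show ?thesis by (rule differentiableI)
qed

lemma C2_dbarC_diff: "C2 (g :: complex \<Rightarrow> complex) \<Longrightarrow> dbarC g differentiable at z"
proof -
  assume g: "C2 g"
  have "dbarC g = (\<lambda>w. (dx g w + \<i> * dy g w) / 2)" by (rule ext) (simp add: dbarC_def)
  thus ?thesis using C2_dx_diff[OF g] C2_dy_diff[OF g]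
    by (simp add: differentiable_add differentiable_mult differentiable_divide)
qed

context cstruct
begin

lemma C2_dH_diff: "C2 g \<Longrightarrow> dH J g differentiable at z"
proof -
  assume g: "C2 g"
  have "dH J g = (\<lambda>w. (1/2) *\<^sub>R (dx g w - J (dy g w)))" by (rule ext) (simp add: dH_def)
  moreover have "(\<lambda>w. J (dy g w)) differentiable at z"
    using bounded_linear.has_derivative[OF J_bl FD_works[OF C2_dy_diff[OF g]]] by (rule differentiableI)
  ultimately show ?thesis using C2_dx_diff[OF g]
    by (simp add: differentiable_diff differentiable_scaleR)
qed

end

context gs
begin

definition "gc n k z = cinner J (v k z) (dn J f n z) / complex_of_real (R k z)"

lemma v_perp: "s \<in> S n z \<Longrightarrow> cinner J s (v n z) = 0" using GS by blast
lemma e_v: "dn J f n z - v n z \<in> S n z" using GS by blast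
lemma v_nz: "v n z \<noteq> 0" using GS by blast
lemma R_pos: "R n z > 0" using v_nz by simp
lemma v_rec: "v n = (\<lambda>z. dn J f n z - (\<Sum>k<n. cscale J (gc n k z) (v k z)))"
  unfolding gc_def using GS by blast

lemma v_in_S: "j < k \<Longrightarrow> v j z \<in> S k z"
proof -
  assume jk: "j < k"
  have "dn J f j z \<in> S k z" using jk by (intro span_mem)
  moreover have "dn J f j z - v j z \<in> S k z"
    using e_v[of j z] jk by (intro span_mono[of j k]) auto
  ultimately show ?thesis using span_diff[of "dn J f j z" _ k "dn J f j z - v j z"] by simp
qed

lemma e_perp: "j < n \<Longrightarrow> cinner J (dn J f j z) (v n z) = 0"
  by (rule v_perp) (rule span_mem)

lemma v_orth: "j \<noteq> k \<Longrightarrow> cinner J (v j z) (v k z) = 0"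
proof (cases "j < k")
  case True thus ?thesis using v_perp v_in_S by blast
next
  case False
  assume "j \<noteq> k"
  hence "k < j" using False by auto
  hence "cinner J (v k z) (v j z) = 0" using v_perp v_in_S by blast
  thus ?thesis by (subst cinner_commute) simp
qed

lemma v_self: "cinner J (v n z) (v n z) = complex_of_real (R n z)"
  by (rule cinner_self)

lemma e_v_inner: "cinner J (dn J f n z) (v n z) = complex_of_real (R n z)"
proof -
  have "cinner J (dn J f n z - v n z) (v n z) = 0" by (rule v_perp[OF e_v])
  hence "cinner J (dn J f n z) (v n z) = cinner J (v n z) (v n z)" by simp
  thus ?thesis by (simp only: v_self)
qed

lemma S_zero: "x \<in> S n z \<Longrightarrow> (\<And>j. j < n \<Longrightarrow> cinner J (dn J f j z) x = 0) \<Longrightarrow> x = 0"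
  by (rule span_orth_zero)

lemma R_fun: "(\<lambda>z. R n z) = (\<lambda>z. inner (v n z) (v n z))"
  by (simp add: power2_norm_eq_inner)

lemma C2_v: "C2 (v n)"
proof (induction n rule: less_induct)
  case (less n)
  have Cv: "C2 (v k)" if "k < n" for k using less.IH[OF that] .
  have CR: "C2 (\<lambda>z. R k z)" if "k < n" for k
    unfolding R_fun by (rule C2_bb[OF bounded_bilinear_inner Cv[OF that] Cv[OF that]])
  have Cg: "C2 (\<lambda>z. gc n k z)" if "k < n" for k
  proof -
    have e: "(\<lambda>z. gc n k z) = (\<lambda>z. cinner J (v k z) (dn J f n z) * complex_of_real (inverse (R k z)))"
      by (rule ext) (simp add: gc_def divide_inverse)
    have "C2 (\<lambda>z. inverse (R k z))" by (rule C2_inverse_pos[OF CR[OF that] R_pos])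
    hence "C2 (\<lambda>z. complex_of_real (inverse (R k z)))" by (rule C2_bl[OF bounded_linear_of_real])
    moreover have "C2 (\<lambda>z. cinner J (v k z) (dn J f n z))"
      by (rule C2_bb[OF cinner_bb Cv[OF that] dn_C2[OF holo]])
    ultimately show ?thesis unfolding e by (intro C2_bb[OF bounded_bilinear_mult])
  qed
  have "C2 (\<lambda>z. dn J f n z - (\<Sum>k<n. cscale J (gc n k z) (v k z)))"
    by (intro C2_diff' dn_C2[OF holo] C2_sum C2_bb[OF cscale_bb] Cg Cv) auto
  thus ?case by (subst v_rec) 
qed

lemma C2_R: "C2 (\<lambda>z. R n z)"
  unfolding R_fun by (rule C2_bb[OF bounded_bilinear_inner C2_v C2_v])

lemma C2_gc: "C2 (\<lambda>z. gc n k z)"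
proof -
  have e: "(\<lambda>z. gc n k z) = (\<lambda>z. cinner J (v k z) (dn J f n z) * complex_of_real (inverse (R k z)))"
    by (rule ext) (simp add: gc_def divide_inverse)
  have "C2 (\<lambda>z. inverse (R k z))" by (rule C2_inverse_pos[OF C2_R R_pos])
  hence "C2 (\<lambda>z. complex_of_real (inverse (R k z)))" by (rule C2_bl[OF bounded_linear_of_real])
  moreover have "C2 (\<lambda>z. cinner J (v k z) (dn J f n z))"
    by (rule C2_bb[OF cinner_bb C2_v dn_C2[OF holo]])
  ultimately show ?thesis unfolding e by (intro C2_bb[OF bounded_bilinear_mult])
qed

lemma v_diff: "v n differentiable at z" by (rule C2_diff[OF C2_v])
lemma dn_diff: "dn J f n differentiable at z" by (rule C2_diff[OF dn_C2[OF holo]])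
lemma gc_diff: "(\<lambda>z. gc n k z) differentiable at z" by (rule C2_diff[OF C2_gc])

end

lemma dC_zero[simp]: "dC (\<lambda>w. 0) z = 0"
  by (simp add: dC_def dx_def dy_def)
lemma dbarC_zero[simp]: "dbarC (\<lambda>w. 0) z = 0"
  by (simp add: dbarC_def dx_def dy_def)

context gs
begin

lemma dH_dn: "dH J (dn J f n) z = dn J f (Suc n) z" by (simp add: dn_Suc)
lemma dHb_dn: "dHb J (dn J f n) z = 0" by (rule dn_dHb[OF holo])

lemma term_diff: "(\<lambda>z. cscale J (gc n k z) (v k z)) differentiable at z"
  by (rule bb_differentiable[OF cscale_bb gc_diff v_diff])

lemma sum_diff: "(\<lambda>z. \<Sum>k<n. cscale J (gc n k z) (v k z)) differentiable at z"
  by (rule differentiable_sum) (auto intro: term_diff)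

lemma dHb_v_expand:
  "dHb J (v n) z = - (\<Sum>k<n. cscale J (dbarC (\<lambda>z. gc n k z) z) (v k z) + cscale J (gc n k z) (dHb J (v k) z))"
proof -
  have "dHb J (v n) z = dHb J (\<lambda>z. dn J f n z - (\<Sum>k<n. cscale J (gc n k z) (v k z))) z"
    by (subst v_rec) (rule refl)
  also have "\<dots> = dHb J (dn J f n) z - dHb J (\<lambda>z. \<Sum>k<n. cscale J (gc n k z) (v k z)) z"
    by (rule dHb_diff[OF dn_diff sum_diff])
  also have "dHb J (\<lambda>z. \<Sum>k<n. cscale J (gc n k z) (v k z)) z = (\<Sum>k<n. dHb J (\<lambda>z. cscale J (gc n k z) (v k z)) z)"
    by (rule dHb_sum) (auto intro: term_diff)
  also have "\<dots> = (\<Sum>k<n. cscale J (dbarC (\<lambda>z. gc n k z) z) (v k z) + cscale J (gc n k z) (dHb J (v k) z))"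
    by (rule sum.cong[OF refl], rule dHb_cscale[OF gc_diff v_diff])
  finally show ?thesis by (simp add: dHb_dn)
qed

lemma dH_v_expand:
  "dH J (v n) z = dn J f (Suc n) z - (\<Sum>k<n. cscale J (dC (\<lambda>z. gc n k z) z) (v k z) + cscale J (gc n k z) (dH J (v k) z))"
proof -
  have "dH J (v n) z = dH J (\<lambda>z. dn J f n z - (\<Sum>k<n. cscale J (gc n k z) (v k z))) z"
    by (subst v_rec) (rule refl)
  also have "\<dots> = dH J (dn J f n) z - dH J (\<lambda>z. \<Sum>k<n. cscale J (gc n k z) (v k z)) z"
    by (rule dH_diff[OF dn_diff sum_diff])
  also have "dH J (\<lambda>z. \<Sum>k<n. cscale J (gc n k z) (v k z)) z = (\<Sum>k<n. dH J (\<lambda>z. cscale J (gc n k z) (v k z)) z)"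
    by (rule dH_sum) (auto intro: term_diff)
  also have "\<dots> = (\<Sum>k<n. cscale J (dC (\<lambda>z. gc n k z) z) (v k z) + cscale J (gc n k z) (dH J (v k) z))"
    by (rule sum.cong[OF refl], rule dH_cscale[OF gc_diff v_diff])
  finally show ?thesis by (simp add: dH_dn)
qed

lemma Dmem: "dHb J (v n) z \<in> S n z \<and> dH J (v n) z - dn J f (Suc n) z \<in> S (Suc n) z"
proof (induction n rule: less_induct)
  case (less n)
  have m1: "dHb J (v n) z \<in> S n z"
    unfolding dHb_v_expand[of n z]
  proof (intro span_minus span_sum span_add span_cscale)
    fix k assume k: "k \<in> {..<n}"
    show "v k z \<in> S n z" using k by (intro v_in_S) simp
    show "dHb J (v k) z \<in> S n z"
      using less.IH[of k] k by (intro span_mono[of k n]) auto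
  qed simp
  have m2: "dH J (v n) z - dn J f (Suc n) z \<in> S (Suc n) z"
  proof -
    have "dH J (v n) z - dn J f (Suc n) z = - (\<Sum>k<n. cscale J (dC (\<lambda>z. gc n k z) z) (v k z) + cscale J (gc n k z) (dH J (v k) z))"
      unfolding dH_v_expand[of n z] by simp
    also have "\<dots> \<in> S (Suc n) z"
    proof (intro span_minus span_sum span_add span_cscale)
      fix k assume k: "k \<in> {..<n}"
      show "v k z \<in> S (Suc n) z" using k by (intro v_in_S) simp
      have a: "dH J (v k) z - dn J f (Suc k) z \<in> S (Suc n) z"
        using less.IH[of k] k by (intro span_mono[of "Suc k" "Suc n"]) auto
      have b: "dn J f (Suc k) z \<in> S (Suc n) z" using k by (intro span_mem) simp
      show "dH J (v k) z \<in> S (Suc n) z"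
        using span_add[OF a b] by simp
    qed simp
    finally show ?thesis .
  qed
  show ?case using m1 m2 by blast
qed

lemma dperp1: "j < n \<Longrightarrow> cinner J (dn J f j z) (dHb J (v n) z) = - cinner J (dn J f (Suc j) z) (v n z)"
proof -
  assume j: "j < n"
  have "(\<lambda>w. cinner J (dn J f j w) (v n w)) = (\<lambda>w. 0)" using e_perp[OF j] by auto
  hence "dbarC (\<lambda>w. cinner J (dn J f j w) (v n w)) z = 0" by simp
  moreover have "dbarC (\<lambda>w. cinner J (dn J f j w) (v n w)) z =
      cinner J (dn J f (Suc j) z) (v n z) + cinner J (dn J f j z) (dHb J (v n) z)"
    using dbarC_cinner[OF dn_diff v_diff] by (simp add: dH_dn)
  ultimately show ?thesis by (simp add: eq_neg_iff_add_eq_0 add.commute)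
qed

lemma dperp2: "j < n \<Longrightarrow> cinner J (dn J f j z) (dH J (v n) z) = 0"
proof -
  assume j: "j < n"
  have "(\<lambda>w. cinner J (dn J f j w) (v n w)) = (\<lambda>w. 0)" using e_perp[OF j] by auto
  hence "dC (\<lambda>w. cinner J (dn J f j w) (v n w)) z = 0" by simp
  moreover have "dC (\<lambda>w. cinner J (dn J f j w) (v n w)) z = cinner J (dn J f j z) (dH J (v n) z)"
    using dC_cinner[OF dn_diff v_diff] by (simp add: dHb_dn)
  ultimately show ?thesis by simp
qed

definition "q n z = (if n = 0 then 0 else R n z / R (n - 1) z)"
definition "bt n z = cinner J (v n z) (dH J (v n) z) / complex_of_real (R n z)"

lemma E1_0: "dHb J (v 0) z = 0"
  using Dmem[of 0 z] by (simp add: span_0)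

lemma E1_Suc: "dHb J (v (Suc m)) z = cscale J (- complex_of_real (R (Suc m) z / R m z)) (v m z)"
proof -
  define c where "c = complex_of_real (R (Suc m) z / R m z)"
  define x where "x = dHb J (v (Suc m)) z + cscale J c (v m z)"
  have xS: "x \<in> S (Suc m) z"
    unfolding x_def using Dmem[of "Suc m" z] v_in_S[where j=m and k="Suc m" and z=z]
    by (intro span_add span_cscale) auto
  have "cinner J (dn J f j z) x = 0" if j: "j < Suc m" for j
  proof (cases "j < m")
    case True
    have "cinner J (dn J f j z) (dHb J (v (Suc m)) z) = 0"
      using dperp1[OF j] e_perp[where j="Suc j" and n="Suc m" and z=z] True by simp
    moreover have "cinner J (dn J f j z) (v m z) = 0" using e_perp[OF True] .
    ultimately show ?thesis unfolding x_def by simp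
  next
    case False
    hence jm: "j = m" using j by simp
    have "cinner J (dn J f m z) (dHb J (v (Suc m)) z) = - complex_of_real (R (Suc m) z)"
      using dperp1[where j=m and n="Suc m" and z=z] by (simp add: e_v_inner)
    moreover have "c * cinner J (dn J f m z) (v m z) = complex_of_real (R (Suc m) z)"
      unfolding c_def e_v_inner using R_pos[where n=m and z=z] by (simp add: field_simps)
    ultimately show ?thesis unfolding x_def jm by simp
  qed
  hence "x = 0" by (intro S_zero[OF xS])
  thus ?thesis unfolding x_def c_def by (simp add: add_eq_0_iff)
qed

lemma E2: "dH J (v n) z = v (Suc n) z + cscale J (bt n z) (v n z)"
proof -
  define y where "y = dH J (v n) z - v (Suc n) z - cscale J (bt n z) (v n z)"
  have yS: "y \<in> S (Suc n) z"
  proof -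
    have "y = (dH J (v n) z - dn J f (Suc n) z) + (dn J f (Suc n) z - v (Suc n) z) - cscale J (bt n z) (v n z)"
      unfolding y_def by simp
    also have "\<dots> \<in> S (Suc n) z"
      using Dmem[of n z] e_v[of "Suc n" z] v_in_S[where j=n and k="Suc n" and z=z]
      by (intro span_diff[OF span_add] span_cscale) auto
    finally show ?thesis .
  qed
  have "cinner J (dn J f j z) y = 0" if j: "j < Suc n" for j
  proof (cases "j < n")
    case True
    thus ?thesis unfolding y_def using dperp2[OF True] e_perp[OF True] e_perp[OF j] by simp
  next
    case False
    hence jn: "j = n" using j by simp
    have a: "cinner J (dn J f n z - v n z) (dH J (v n) z) = 0"
      by (rule span_orth[OF _ e_v]) (rule dperp2)
    have b: "cinner J (dn J f n z) (dH J (v n) z) = cinner J (v n z) (dH J (v n) z)"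
      using a by simp
    have c: "bt n z * complex_of_real (R n z) = cinner J (v n z) (dH J (v n) z)"
      unfolding bt_def using R_pos[where n=n and z=z] by simp
    show ?thesis unfolding y_def jn using b c e_perp[where j=n and n="Suc n" and z=z]
      by (simp add: e_v_inner)
  qed
  hence "y = 0" by (intro S_zero[OF yS])
  thus ?thesis unfolding y_def by (simp add: algebra_simps)
qed

end

context gs
begin

lemma R_fun_c: "(\<lambda>w. complex_of_real (R n w)) = (\<lambda>w. cinner J (v n w) (v n w))"
  by (rule ext) (simp only: v_self)

lemma v_dHb_zero: "cinner J (v n z) (dHb J (v n) z) = 0"
proof -
  have "cinner J (dHb J (v n) z) (v n z) = 0" using v_perp Dmem by blast
  thus ?thesis by (subst cinner_commute) simp
qed

lemma dHb_v_zero: "cinner J (dHb J (v n) z) (v n z) = 0"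
  using v_perp Dmem by blast

lemma dbarC_R: "dbarC (\<lambda>w. complex_of_real (R n w)) z = cinner J (dH J (v n) z) (v n z)"
  unfolding R_fun_c dbarC_cinner[OF v_diff v_diff] v_dHb_zero by simp

lemma dC_R: "dC (\<lambda>w. complex_of_real (R n w)) z = cinner J (v n z) (dH J (v n) z)"
  unfolding R_fun_c dC_cinner[OF v_diff v_diff] dHb_v_zero by simp

lemma R_diff: "(\<lambda>w. R n w) differentiable at z" by (rule C2_diff[OF C2_R])

lemma A_fun: "dbarC (\<lambda>w. complex_of_real (ln (R n w))) =
    (\<lambda>w. complex_of_real (inverse (R n w)) * cinner J (dH J (v n) w) (v n w))"
proof
  fix w
  have "dbarC (\<lambda>w. complex_of_real (ln (R n w))) w = complex_of_real (inverse (R n w)) * dbarC (\<lambda>w. complex_of_real (R n w)) w"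
    by (rule dbarC_real_comp[OF R_diff]) (intro DERIV_ln R_pos)
  thus "dbarC (\<lambda>w. complex_of_real (ln (R n w))) w = complex_of_real (inverse (R n w)) * cinner J (dH J (v n) w) (v n w)"
    by (simp only: dbarC_R)
qed

lemma C2_q: "C2 (\<lambda>z. q n z)"
proof (cases n)
  case 0 thus ?thesis by (simp add: q_def)
next
  case (Suc m)
  have e: "(\<lambda>z. q n z) = (\<lambda>z. R n z * inverse (R m z))"
    by (rule ext) (simp add: q_def Suc divide_inverse)
  show ?thesis unfolding e
    by (intro C2_bb[OF bounded_bilinear_mult] C2_R C2_inverse_pos R_pos)
qed

lemma dHb_v_fun: "dHb J (v n) = (\<lambda>w. cscale J (- complex_of_real (q n w)) (v (n - 1) w))"
proof
  fix w show "dHb J (v n) w = cscale J (- complex_of_real (q n w)) (v (n - 1) w)"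
  proof (cases n)
    case 0 thus ?thesis by (simp add: E1_0 q_def)
  next
    case (Suc m) thus ?thesis by (simp add: E1_Suc q_def)
  qed
qed

lemma key_inner: "cinner J (dHb J (dH J (v n)) z) (v n z) = - complex_of_real (q n z * R n z)"
proof -
  have qd: "(\<lambda>w. - complex_of_real (q n w)) differentiable at z"
    using C2_diff[OF C2_bl[OF bounded_linear_of_real C2_q]] by (intro differentiable_minus)
  have "dHb J (dH J (v n)) z = dH J (dHb J (v n)) z" by (rule dH_dHb_comm[OF C2_v, symmetric])
  also have "\<dots> = dH J (\<lambda>w. cscale J (- complex_of_real (q n w)) (v (n - 1) w)) z"
    unfolding dHb_v_fun ..
  also have "\<dots> = cscale J (dC (\<lambda>w. - complex_of_real (q n w)) z) (v (n - 1) z)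
      + cscale J (- complex_of_real (q n z)) (dH J (v (n - 1)) z)"
    by (rule dH_cscale[OF qd v_diff])
  finally have eq: "dHb J (dH J (v n)) z = \<dots>" .
  show ?thesis
  proof (cases n)
    case 0 thus ?thesis unfolding eq by (simp add: q_def)
  next
    case (Suc m)
    have o: "cinner J (v m z) (v n z) = 0" using Suc by (intro v_orth) simp
    have d: "cinner J (dH J (v m) z) (v n z) = complex_of_real (R n z)"
      unfolding E2[of m z] Suc by (simp add: v_orth v_self)
    show ?thesis unfolding eq using o d Suc by simp
  qed
qed

lemma dHv_norm: "cinner J (dH J (v n) z) (dH J (v n) z) = complex_of_real (R (Suc n) z) + cnj (bt n z) * bt n z * complex_of_real (R n z)"
  unfolding E2[of n z] by (simp add: v_orth v_self v_orth[of "Suc n" n] algebra_simps)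

lemma A_val: "cinner J (dH J (v n) z) (v n z) = cnj (bt n z) * complex_of_real (R n z)"
  unfolding E2[of n z] by (simp add: v_orth v_self)

lemma bt_val: "cinner J (v n z) (dH J (v n) z) = bt n z * complex_of_real (R n z)"
  unfolding bt_def using R_pos[where n=n and z=z] by simp

lemma final_n: "dC (dbarC (\<lambda>w. complex_of_real (ln (R n w)))) z = complex_of_real (q (Suc n) z - q n z)"
proof -
  have d1: "(\<lambda>w. complex_of_real (inverse (R n w))) differentiable at z"
    by (rule C2_diff[OF C2_bl[OF bounded_linear_of_real C2_inverse_pos[OF C2_R R_pos]]])
  have d2: "(\<lambda>w. cinner J (dH J (v n) w) (v n w)) differentiable at z"
    by (rule bb_differentiable[OF cinner_bb C2_dH_diff[OF C2_v] v_diff])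
  have i1: "dC (\<lambda>w. complex_of_real (inverse (R n w))) z =
      complex_of_real (- (inverse (R n z) ^ Suc (Suc 0))) * dC (\<lambda>w. complex_of_real (R n w)) z"
    by (rule dC_real_comp[OF R_diff]) (intro DERIV_inverse, use R_pos[where n=n and z=z] in simp)
  have i2: "dC (\<lambda>w. cinner J (dH J (v n) w) (v n w)) z =
      cinner J (dHb J (dH J (v n)) z) (v n z) + cinner J (dH J (v n) z) (dH J (v n) z)"
    by (rule dC_cinner[OF C2_dH_diff[OF C2_v] v_diff])
  have "dC (dbarC (\<lambda>w. complex_of_real (ln (R n w)))) z =
      dC (\<lambda>w. complex_of_real (inverse (R n w)) * cinner J (dH J (v n) w) (v n w)) z"
    unfolding A_fun ..
  also have "\<dots> = dC (\<lambda>w. complex_of_real (inverse (R n w))) z * cinner J (dH J (v n) z) (v n z)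
      + complex_of_real (inverse (R n z)) * dC (\<lambda>w. cinner J (dH J (v n) w) (v n w)) z"
    by (rule dC_mult[OF d1 d2])
  also have "\<dots> = complex_of_real (- (inverse (R n z) ^ 2)) * (bt n z * complex_of_real (R n z)) * (cnj (bt n z) * complex_of_real (R n z))
      + complex_of_real (inverse (R n z)) * (- complex_of_real (q n z * R n z) + (complex_of_real (R (Suc n) z) + cnj (bt n z) * bt n z * complex_of_real (R n z)))"
    unfolding i1 i2 dC_R[where n=n and z=z] bt_val[where n=n and z=z] A_val[where n=n and z=z]
      key_inner[where n=n and z=z] dHv_norm[where n=n and z=z] by (simp add: numeral_2_eq_2)
  also have "\<dots> = complex_of_real (q (Suc n) z - q n z)"
    using R_pos[where n=n and z=z] by (simp add: q_def field_simps power2_eq_square)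
  finally show ?thesis .
qed

end

context gs
begin

lemma un_fun: "un J f k = (\<lambda>z. cscale J (complex_of_real (inverse (norm (v k z)))) (v k z))"
  by (rule ext) (simp only: un_def rn_def cscale_simps(6) divide_inverse mult_1)

lemma invn_diff: "(\<lambda>w. complex_of_real (inverse (norm (v k w)))) differentiable at z"
proof -
  have e: "(\<lambda>w. inverse (norm (v k w))) = (\<lambda>w. inverse (sqrt (R k w)))"
    by (rule ext) simp
  have "(\<lambda>w. inverse (norm (v k w))) differentiable at z"
    unfolding e by (rule inv_sqrt_diff[OF R_diff R_pos])
  from bounded_linear.has_derivative[OF bounded_linear_of_real FD_works[OF this]]
  show ?thesis by (rule differentiableI)
qed

lemma hN_eq: "hN J f (Suc m) z = q (Suc m) z"
proof -
  have "dH J (un J f m) z = cscale J (dC (\<lambda>w. complex_of_real (inverse (norm (v m w)))) z) (v m z)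
      + cscale J (complex_of_real (inverse (norm (v m z)))) (dH J (v m) z)"
    unfolding un_fun by (rule dH_cscale[OF invn_diff v_diff])
  hence "cinner J (un J f (Suc m) z) (dH J (un J f m) z) =
     complex_of_real (inverse (norm (v (Suc m) z))) * (complex_of_real (inverse (norm (v m z))) * complex_of_real (R (Suc m) z))"
    unfolding un_fun E2[where n=m and z=z]
    by (simp add: v_orth v_orth[of "Suc m" m] v_self)
  also have "\<dots> = complex_of_real (norm (v (Suc m) z) / norm (v m z))"
    using v_nz[where n="Suc m" and z=z] by (simp add: field_simps power2_eq_square)
  finally have "cmod (cinner J (un J f (Suc m) z) (dH J (un J f m) z)) = norm (v (Suc m) z) / norm (v m z)"
    by (simp add: norm_divide)
  thus ?thesis unfolding hN_def q_def by (simp add: power_divide)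
qed

lemma hN_q: "hN J f n z = q n z"
proof (cases n)
  case 0 thus ?thesis by (simp add: hN_def q_def)
next
  case (Suc m) thus ?thesis by (simp only: hN_eq)
qed

lemma main_gs:
  assumes N: "N \<ge> 1"
  shows "(\<forall>z. hN J f N z > 0) \<and>
         (\<forall>z. has_dx (\<lambda>w. complex_of_real (ln (hN J f N w))) z \<and>
              has_dy (\<lambda>w. complex_of_real (ln (hN J f N w))) z \<and>
              has_dx (dbarC (\<lambda>w. complex_of_real (ln (hN J f N w)))) z \<and>
              has_dy (dbarC (\<lambda>w. complex_of_real (ln (hN J f N w)))) z \<and>
              dC (dbarC (\<lambda>w. complex_of_real (ln (hN J f N w)))) z =
                complex_of_real (hN J f (N - 1) z - 2 * hN J f N z + hN J f (N + 1) z))"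
proof -
  obtain m where m: "N = Suc m" using N by (cases N) auto
  define L where "L n = (\<lambda>w. complex_of_real (ln (R n w)))" for n
  have CL: "C2 (L n)" for n
    unfolding L_def by (intro C2_bl[OF bounded_linear_of_real] C2_ln_pos C2_R R_pos)
  have pos: "hN J f N z > 0" for z
    unfolding hN_q m q_def using R_pos[where n="Suc m" and z=z] R_pos[where n=m and z=z] by simp
  have Lfun: "(\<lambda>w. complex_of_real (ln (hN J f N w))) = (\<lambda>w. L N w - L m w)"
    unfolding L_def
  proof
    fix w
    show "complex_of_real (ln (hN J f N w)) = complex_of_real (ln (R N w)) - complex_of_real (ln (R m w))"
      unfolding hN_q m q_def using R_pos[where n="Suc m" and z=w] R_pos[where n=m and z=w]
      by (simp add: ln_div)
  qed
  have CLL: "C2 (\<lambda>w. L N w - L m w)" using CL by (intro C2_diff')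
  have dbL: "dbarC (\<lambda>w. L N w - L m w) = (\<lambda>w. dbarC (L N) w - dbarC (L m) w)"
    by (rule ext) (rule dbarC_diff[OF C2_diff[OF CL] C2_diff[OF CL]])
  have dbLd: "(\<lambda>w. dbarC (L N) w - dbarC (L m) w) differentiable at z" for z
    by (intro differentiable_diff C2_dbarC_diff CL)
  have fin: "dC (dbarC (\<lambda>w. L N w - L m w)) z =
      complex_of_real (hN J f (N - 1) z - 2 * hN J f N z + hN J f (N + 1) z)" for z
  proof -
    have "dC (dbarC (\<lambda>w. L N w - L m w)) z = dC (dbarC (L N)) z - dC (dbarC (L m)) z"
      unfolding dbL by (rule dC_diff[OF C2_dbarC_diff[OF CL] C2_dbarC_diff[OF CL]])
    also have "\<dots> = complex_of_real (q (Suc N) z - q N z) - complex_of_real (q (Suc m) z - q m z)"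
      unfolding L_def final_n ..
    also have "\<dots> = complex_of_real (hN J f (N - 1) z - 2 * hN J f N z + hN J f (N + 1) z)"
      unfolding hN_q m by simp
    finally show ?thesis .
  qed
  show ?thesis
    unfolding Lfun
    using pos fin dbLd C2_diff[OF CLL] by (auto intro!: has_dx_I has_dy_I simp: dbL)
qed

end

theorem mainTheorem7:
  fixes J :: "'h::{real_inner, complete_space} \<Rightarrow> 'h"
    and f :: "complex \<Rightarrow> 'h"
    and \<omega>1 \<omega>2 :: complex and N :: nat
  assumes J: "complex_structure J"
    and separable: "\<exists>C. countable C \<and> closure C = (UNIV :: 'h set)"
    and lat: "\<omega>1 \<noteq> 0" "Im (\<omega>2 / \<omega>1) \<noteq> 0"
    and holo: "holoH J f"
    and indep: "\<And>z n. clin_indep J (\<lambda>k. dn J f k z) n"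
    and quasi_periodic: "\<And>l. l \<in> lattice \<omega>1 \<omega>2 \<Longrightarrow>
       \<exists>c V. c holomorphic_on UNIV \<and> (\<forall>z. c z \<noteq> 0) \<and> unitary J V \<and>
             (\<forall>z. f (z + l) = cscale J (c z) (V (f z)))"
    and N: "N \<ge> 1"
  shows "(\<forall>z. hN J f N z > 0) \<and>
         (\<forall>z. has_dx (\<lambda>w. complex_of_real (ln (hN J f N w))) z \<and>
              has_dy (\<lambda>w. complex_of_real (ln (hN J f N w))) z \<and>
              has_dx (dbarC (\<lambda>w. complex_of_real (ln (hN J f N w)))) z \<and>
              has_dy (dbarC (\<lambda>w. complex_of_real (ln (hN J f N w)))) z \<and>
              dC (dbarC (\<lambda>w. complex_of_real (ln (hN J f N w)))) z =
                complex_of_real (hN J f (N - 1) z - 2 * hN J f N z + hN J f (N + 1) z))"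
proof -
  interpret gs J f by unfold_locales (use J holo indep in auto)
  show ?thesis by (rule main_gs[OF N])
qed

end
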